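(* Consider the online active learning problem and the OLA algorithm described in the context, run over a horizon of length $T$ with any positive integer parameter $m$. Then the expected regret of OLA satisfies $$\mathbb E[R(T)]\le \tfrac12 .$$
   Context: Setting. $\mathcal X$ is an instance space and $\mathcal Y=\{0,1\}$. Instances $X_1,X_2,\dots$ are drawn i.i.d. from an unknown distribution $\mathbb P_X$ on $\mathcal X$. Each $X_t$ has a hidden label $Y_t$, with $(X_t,Y_t)$ i.i.d. from an unknown joint distribution $\mathbb P=\mathbb P_X\times\mathbb P_{Y|X}$. Let $\eta(x)=\mathbb P(Y=1\mid X=x)$ and let $h^*(x)=1$ if $\eta(x)\ge 1/2$ and $h^*(x)=0$ otherwise (the Bayes optimal classifier). $\mathcal H$ is a set of measurable functions $\mathcal X\to\{0,1\}$ of finite VC dimension $d$, and it is assumed that $h^*\in\mathcal H$. For a set $\mathcal H'$ of classifiers, $\mathcal S(\mathcal H',n)$ denotes its $n$-th shattering coefficient. Protocol. At each time $t=1,\dots,T$ the learner sees $X_t$ and decides whether to query ($\upsilon_t=1$) or not ($\upsilon_t=0$). If it queries, $Y_t$ is revealed; otherwise it outputs a predicted label $\lambda_t$ (decisions depend only on past information). The regret is $R(T)=\sum_{t\le T:\upsilon_t=0}\big(\mathbb 1[\lambda_t\neq Y_t]-\mathbb 1[h^*(X_t)\neq Y_t]\big)$ and the label complexity is $Q(T)=\sum_{t=1}^T\mathbb 1[\upsilon_t=1]$. Notation. For $\mathcal H'\subseteq\mathcal H$, $\Psi(\mathcal H')=\{x\in\mathcal X:\exists h_1,h_2\in\mathcal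 H',\,h_1(x)\neq h_2(x)\}$. For a finite set $\mathcal Z$ of labeled examples, $\epsilon_{\mathcal Z}(h)=\frac1{|\mathcal Z|}\sum_{(x,y)\in\mathcal Z}\mathbb 1[h(x)\neq y]$ and $\epsilon_{\mathcal Z}(h_1,h_2)=\frac1{|\mathcal Z|}\sum_{(x,y)\in\mathcal Z}\mathbb 1[h_1(x)\neq y\wedge h_2(x)=y]$. Let $\beta_n=\sqrt{(4/n)\ln\big(16T^2\mathcal S(\mathcal H,2n)^2\big)}$. OLA algorithm (inputs $T,d,m$). Set $M=\lceil m d\log T\rceil$, epoch $k=0$, $\mathcal H_0=\mathcal H$, $\mathcal D_0=\mathcal X$, $\mathcal Z_0=\emptyset$. For $t=1,\dots,T$: if $X_t\notin\mathcal D_k$, do not query and label $X_t$ by $h(X_t)$ for an arbitrary $h\in\mathcal H_k$; if $X_t\in\mathcal D_k$, query $Y_t$ and add $(X_t,Y_t)$ to $\mathcal Z_k$; when $|\mathcal Z_k|=M$, let $h_k^*\in\arg\min_{h\in\mathcal H_k}\epsilon_{\mathcal Z_k}(h)$, set $$\mathcal H_{k+1}=\{h\in\mathcal H_k:\ \epsilon_{\mathcal Z_k}(h)-\epsilon_{\mathcal Z_k}(h_k^* )<\Delta_{\mathcal Z_k}(h,h_k^* )\},\qquad \mathcal D_{k+1}=\Psi(\mathcal H_{k+1}),$$ where $\Delta_{\mathcal Z_k}(h,h_k^* )=\beta_M^2+\beta_M\big(\sqrt{\epsilon_{\mathcal Z_k}(h,h_k^* )}+\sqrt{\epsilon_{\mathcal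 Z_k}(h_k^*,h)}\big)$, set $\mathcal Z_{k+1}=\emptyset$, and increment $k$. *)

theory Defs
  imports "HOL-Probability.Probability"
begin

type_synonym 'x classifier = "'x \<Rightarrow> bool"
type_synonym 'x sample = "('x \<times> bool) list"

text \<open>Labels: True stands for 1, False for 0.\<close>

definition shatters :: "'x classifier set \<Rightarrow> 'x set \<Rightarrow> bool" where
  "shatters H C \<longleftrightarrow> (\<forall>B\<subseteq>C. \<exists>h\<in>H. \<forall>x\<in>C. h x = (x \<in> B))"

definition vc_dim :: "'x set \<Rightarrow> 'x classifier set \<Rightarrow> nat \<Rightarrow> bool" where
  "vc_dim X H d \<longleftrightarrow>
     (\<exists>C. C \<subseteq> X \<and> finite C \<and> card C = d \<and> shatters H C) \<and>
     (\<forall>C. C \<subseteq> X \<and> finite C \<and> shatters H C \<longrightarrow> card C \<le> d)"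

definition shatter_coeff :: "'x set \<Rightarrow> 'x classifier set \<Rightarrow> nat \<Rightarrow> nat" where
  "shatter_coeff X H n =
     Max {card ((\<lambda>h. map h xs) ` H) | xs. length xs = n \<and> set xs \<subseteq> X}"

definition Psi :: "'x classifier set \<Rightarrow> 'x set" where
  "Psi H' = {x. \<exists>h1\<in>H'. \<exists>h2\<in>H'. h1 x \<noteq> h2 x}"

definition emp_err :: "'x sample \<Rightarrow> 'x classifier \<Rightarrow> real" where
  "emp_err Z h = (\<Sum>(x,y)\<leftarrow>Z. of_bool (h x \<noteq> y)) / real (length Z)"

definition emp_err2 :: "'x sample \<Rightarrow> 'x classifier \<Rightarrow> 'x classifier \<Rightarrow> real" where
  "emp_err2 Z h1 h2 = (\<Sum>(x,y)\<leftarrow>Z. of_bool (h1 x \<noteq> y \<and> h2 x = y)) / real (length Z)"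

definition beta :: "'x set \<Rightarrow> 'x classifier set \<Rightarrow> nat \<Rightarrow> nat \<Rightarrow> real" where
  "beta X H T n = sqrt ((4 / real n) * ln (16 * real T ^ 2 * real (shatter_coeff X H (2 * n)) ^ 2))"

definition ola_M :: "nat \<Rightarrow> nat \<Rightarrow> nat \<Rightarrow> nat" where
  "ola_M m d T = nat \<lceil>real m * real d * ln (real T)\<rceil>"

text \<open>Version-space update at the end of an epoch; amin is the argmin choice.\<close>
definition ola_update ::
  "real \<Rightarrow> ('x classifier set \<Rightarrow> 'x sample \<Rightarrow> 'x classifier)
   \<Rightarrow> 'x classifier set \<Rightarrow> 'x sample \<Rightarrow> 'x classifier set" where
  "ola_update b amin Hk Z =
     (let hs = amin Hk Z in
      {h \<in> Hk. emp_err Z h - emp_err Z hs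
               < b\<^sup>2 + b * (sqrt (emp_err2 Z h hs) + sqrt (emp_err2 Z hs h))})"

definition ola_step ::
  "nat \<Rightarrow> real \<Rightarrow> ('x classifier set \<Rightarrow> 'x sample \<Rightarrow> 'x classifier)
   \<Rightarrow> 'x classifier set \<times> 'x set \<times> 'x sample \<Rightarrow> 'x \<times> bool
   \<Rightarrow> 'x classifier set \<times> 'x set \<times> 'x sample" where
  "ola_step M b amin st e =
     (case st of (Hk, Dk, Z) \<Rightarrow>
       if fst e \<in> Dk then
         (let Z' = Z @ [e] in
          if length Z' = M then
            (let H' = ola_update b amin Hk Z' in (H', Psi H', []))
          else (Hk, Dk, Z'))
       else (Hk, Dk, Z))"

text \<open>State before round t+1, i.e. after processing omega 0, ..., omega (t-1).
  Initially H_0 = H, D_0 = whole instance space, Z_0 empty.\<close>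
fun ola_state ::
  "'x classifier set \<Rightarrow> nat \<Rightarrow> real \<Rightarrow> ('x classifier set \<Rightarrow> 'x sample \<Rightarrow> 'x classifier)
   \<Rightarrow> (nat \<Rightarrow> 'x \<times> bool) \<Rightarrow> nat \<Rightarrow> 'x classifier set \<times> 'x set \<times> 'x sample" where
  "ola_state H M b amin \<omega> 0 = (H, UNIV, [])"
| "ola_state H M b amin \<omega> (Suc t) = ola_step M b amin (ola_state H M b amin \<omega> t) (\<omega> t)"

text \<open>Regret over T rounds (round t+1 uses example omega t); sel is the labelling
  choice (a prediction of some classifier of the current version space), hs the
  Bayes classifier.\<close>
definition ola_regret ::
  "'x classifier set \<Rightarrow> nat \<Rightarrow> real \<Rightarrow> ('x classifier set \<Rightarrow> 'x sample \<Rightarrow> 'x classifier)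
   \<Rightarrow> ('x classifier set \<Rightarrow> 'x \<Rightarrow> bool) \<Rightarrow> 'x classifier \<Rightarrow> nat
   \<Rightarrow> (nat \<Rightarrow> 'x \<times> bool) \<Rightarrow> real" where
  "ola_regret H M b amin sel hs T \<omega> =
     (\<Sum>t<T. case ola_state H M b amin \<omega> t of (Hk, Dk, Z) \<Rightarrow>
        (if fst (\<omega> t) \<in> Dk then 0
         else of_bool (sel Hk (fst (\<omega> t)) \<noteq> snd (\<omega> t))
              - of_bool (hs (fst (\<omega> t)) \<noteq> snd (\<omega> t))))"

end

theory Submission
  imports Defs
begin


lemma ola_step_eq:
  "ola_step M b amin (Hk,Dk,Z) e =
    (if fst e \<in> Dk then
       (if length (Z@[e]) = M then
          (ola_update b amin Hk (Z@[e]), Psi (ola_update b amin Hk (Z@[e])), [])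
        else (Hk,Dk,Z@[e]))
     else (Hk,Dk,Z))"
  by (simp add: ola_step_def Let_def)

lemma ola_update_sub: "ola_update b amin Hk Z \<subseteq> Hk"
  by (auto simp: ola_update_def Let_def)

lemma ola_state_mono_Suc:
  "fst (ola_state H M b amin \<omega> (Suc t)) \<subseteq> fst (ola_state H M b amin \<omega> t)"
  using ola_update_sub[of b amin]
  by (cases "ola_state H M b amin \<omega> t") (auto simp: ola_step_eq)

lemma ola_state_mono:
  "t \<le> t' \<Longrightarrow> fst (ola_state H M b amin \<omega> t') \<subseteq> fst (ola_state H M b amin \<omega> t)"
proof (induction t' rule: dec_induct)
  case (step n) then show ?case using ola_state_mono_Suc by blast
qed simp

lemma ola_state_sub: "fst (ola_state H M b amin \<omega> t) \<subseteq> H"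
  using ola_state_mono[of 0 t H M b amin \<omega>] by simp

lemma ola_state_D:
  "fst (snd (ola_state H M b amin \<omega> t)) = UNIV \<or>
   fst (snd (ola_state H M b amin \<omega> t)) = Psi (fst (ola_state H M b amin \<omega> t))"
proof (induction t)
  case 0 then show ?case by simp
next
  case (Suc t)
  then show ?case
    by (cases "ola_state H M b amin \<omega> t") (auto simp: ola_step_eq)
qed

lemma ola_state_epoch:
  "\<exists>s\<le>t. ola_state H M b amin \<omega> s =
        (fst (ola_state H M b amin \<omega> t), fst (snd (ola_state H M b amin \<omega> t)), []) \<and>
      snd (snd (ola_state H M b amin \<omega> t)) =
        map \<omega> (filter (\<lambda>i. fst (\<omega> i) \<in> fst (snd (ola_state H M b amin \<omega> t))) [s..<t])"
proof (induction t)
  case 0 then show ?case by simp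
next
  case (Suc t)
  obtain Hk Dk Z where st: "ola_state H M b amin \<omega> t = (Hk, Dk, Z)" by (cases "ola_state H M b amin \<omega> t") auto
  from Suc st obtain s where s: "s \<le> t" "ola_state H M b amin \<omega> s = (Hk, Dk, [])"
    "Z = map \<omega> (filter (\<lambda>i. fst (\<omega> i) \<in> Dk) [s..<t])" by auto
  show ?case
  proof (cases "fst (\<omega> t) \<in> Dk")
    case True
    show ?thesis
    proof (cases "length (Z @ [\<omega> t]) = M")
      case True
      then show ?thesis using \<open>fst (\<omega> t) \<in> Dk\<close> st
        by (intro exI[of _ "Suc t"]) (simp add: ola_step_eq)
    next
      case False
      then show ?thesis using \<open>fst (\<omega> t) \<in> Dk\<close> st s
        by (intro exI[of _ s]) (simp add: ola_step_eq)
    qed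
  next
    case False
    then show ?thesis using st s
      by (intro exI[of _ s]) (simp add: ola_step_eq)
  qed
qed

lemma ola_state_local:
  "(\<And>i. i < t \<Longrightarrow> \<omega> i = \<omega>' i) \<Longrightarrow> ola_state H M b amin \<omega> t = ola_state H M b amin \<omega>' t"
  by (induction t) auto

lemma ola_regret_local:
  "(\<And>i. i < T \<Longrightarrow> \<omega> i = \<omega>' i) \<Longrightarrow> ola_regret H M b amin sel hs T \<omega> = ola_regret H M b amin sel hs T \<omega>'"
  unfolding ola_regret_def
proof (intro sum.cong refl)
  fix t assume "\<And>i. i < T \<Longrightarrow> \<omega> i = \<omega>' i" "t \<in> {..<T}"
  then have "ola_state H M b amin \<omega> t = ola_state H M b amin \<omega>' t" "\<omega> t = \<omega>' t"
    by (auto intro: ola_state_local)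
  then show "(case ola_state H M b amin \<omega> t of (Hk, Dk, Z) \<Rightarrow>
        (if fst (\<omega> t) \<in> Dk then 0
         else of_bool (sel Hk (fst (\<omega> t)) \<noteq> snd (\<omega> t))
              - of_bool (hs (fst (\<omega> t)) \<noteq> snd (\<omega> t)))) =
     (case ola_state H M b amin \<omega>' t of (Hk, Dk, Z) \<Rightarrow>
        (if fst (\<omega>' t) \<in> Dk then 0
         else of_bool (sel Hk (fst (\<omega>' t)) \<noteq> snd (\<omega>' t))
              - of_bool (hs (fst (\<omega>' t)) \<noteq> snd (\<omega>' t))))" by (simp only:)
qed


lemma regret_term_bound:
  assumes sel_ok: "\<forall>A x. A \<noteq> {} \<longrightarrow> (\<exists>h\<in>A. sel A x = h x)"
  shows "(case ola_state H M b amin \<omega> t of (Hk, Dk, Z) \<Rightarrow>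
        (if fst (\<omega> t) \<in> Dk then 0
         else of_bool (sel Hk (fst (\<omega> t)) \<noteq> snd (\<omega> t))
              - of_bool (hs (fst (\<omega> t)) \<noteq> snd (\<omega> t)))) \<le>
      (of_bool (hs \<notin> fst (ola_state H M b amin \<omega> t)) :: real)"
proof -
  obtain Hk Dk Z where st: "ola_state H M b amin \<omega> t = (Hk, Dk, Z)"
    by (cases "ola_state H M b amin \<omega> t") auto
  have D: "Dk = UNIV \<or> Dk = Psi Hk" using ola_state_D[of H M b amin \<omega> t] st by simp
  show ?thesis
  proof (cases "hs \<in> Hk")
    case True
    show ?thesis
    proof (cases "fst (\<omega> t) \<in> Dk")
      case False
      then have "fst (\<omega> t) \<notin> Psi Hk" using D by auto
      then have agree: "\<forall>h1\<in>Hk. \<forall>h2\<in>Hk. h1 (fst (\<omega> t)) = h2 (fst (\<omega> t))"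
        by (auto simp: Psi_def)
      from sel_ok True obtain h where "h \<in> Hk" "sel Hk (fst (\<omega> t)) = h (fst (\<omega> t))" by blast
      then have "sel Hk (fst (\<omega> t)) = hs (fst (\<omega> t))" using agree True by auto
      then show ?thesis using st False True by simp
    qed (use st True in simp)
  qed (use st in auto)
qed

lemma regret_le:
  assumes sel_ok: "\<forall>A x. A \<noteq> {} \<longrightarrow> (\<exists>h\<in>A. sel A x = h x)"
  shows "ola_regret H M b amin sel hs T \<omega> \<le> real T * of_bool (hs \<notin> fst (ola_state H M b amin \<omega> T))"
proof -
  have "ola_regret H M b amin sel hs T \<omega> \<le> (\<Sum>t<T. of_bool (hs \<notin> fst (ola_state H M b amin \<omega> T)))"
    unfolding ola_regret_def
  proof (intro sum_mono)
    fix t assume "t \<in> {..<T}"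
    then have "fst (ola_state H M b amin \<omega> T) \<subseteq> fst (ola_state H M b amin \<omega> t)"
      by (intro ola_state_mono) auto
    then have "(of_bool (hs \<notin> fst (ola_state H M b amin \<omega> t)) :: real) \<le>
               of_bool (hs \<notin> fst (ola_state H M b amin \<omega> T))" by auto
    with regret_term_bound[OF sel_ok, where H=H and M=M and b=b and amin=amin and \<omega>=\<omega> and t=t and hs=hs]
    show "(case ola_state H M b amin \<omega> t of (Hk, Dk, Z) \<Rightarrow>
        (if fst (\<omega> t) \<in> Dk then 0
         else of_bool (sel Hk (fst (\<omega> t)) \<noteq> snd (\<omega> t))
              - of_bool (hs (fst (\<omega> t)) \<noteq> snd (\<omega> t)))) \<le>
      (of_bool (hs \<notin> fst (ola_state H M b amin \<omega> T)) :: real)" by (rule order_trans)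
  qed
  then show ?thesis by simp
qed

lemma regret_abs_le: "\<bar>ola_regret H M b amin sel hs T \<omega>\<bar> \<le> real T"
proof -
  have "\<bar>ola_regret H M b amin sel hs T \<omega>\<bar> \<le> (\<Sum>t<T. (1::real))"
    unfolding ola_regret_def
    by (rule order_trans[OF sum_abs sum_mono]) (auto split: prod.splits)
  then show ?thesis by simp
qed

definition elimc :: "real \<Rightarrow> 'x sample \<Rightarrow> 'x classifier \<Rightarrow> 'x classifier \<Rightarrow> bool" where
  "elimc b L hs h \<longleftrightarrow> \<not> (emp_err L hs - emp_err L h
       < b\<^sup>2 + b * (sqrt (emp_err2 L hs h) + sqrt (emp_err2 L h hs)))"

definition badw :: "'x classifier set \<Rightarrow> nat \<Rightarrow> real \<Rightarrow> 'x classifier \<Rightarrow> nat \<Rightarrow> nat \<Rightarrow> 'x set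
   \<Rightarrow> (nat \<Rightarrow> 'x \<times> bool) \<Rightarrow> bool" where
  "badw H M b hs T s Dk \<omega> \<longleftrightarrow> (\<exists>t. s \<le> t \<and> t < T \<and>
      length (filter (\<lambda>i. fst (\<omega> i) \<in> Dk) [s..<Suc t]) = M \<and>
      (\<exists>h\<in>H. elimc b (map \<omega> (filter (\<lambda>i. fst (\<omega> i) \<in> Dk) [s..<Suc t])) hs h))"

lemma exists_drop:
  assumes "P 0" "\<not> P T"
  shows "\<exists>t<T. P t \<and> \<not> P (Suc t)"
  using assms
proof (induction T)
  case (Suc T) then show ?case by (cases "P T") (auto intro: less_SucI)
qed simp

lemma elim_implies_bad:
  assumes amin_ok: "\<forall>A Z. A \<noteq> {} \<longrightarrow> amin A Z \<in> A"
    and hsH: "hs \<in> H"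
    and out: "hs \<notin> fst (ola_state H M b amin \<omega> T)"
  shows "0 < M \<and> (\<exists>s<T. badw H M b hs T s (fst (snd (ola_state H M b amin \<omega> s))) \<omega>)"
proof -
  obtain t where t: "t < T" "hs \<in> fst (ola_state H M b amin \<omega> t)"
      "hs \<notin> fst (ola_state H M b amin \<omega> (Suc t))"
    using exists_drop[of "\<lambda>t. hs \<in> fst (ola_state H M b amin \<omega> t)" T] hsH out by auto
  obtain Hk Dk Z where st: "ola_state H M b amin \<omega> t = (Hk, Dk, Z)"
    by (cases "ola_state H M b amin \<omega> t") auto
  obtain s where s: "s \<le> t" "ola_state H M b amin \<omega> s = (Hk, Dk, [])"
    "Z = map \<omega> (filter (\<lambda>i. fst (\<omega> i) \<in> Dk) [s..<t])"
    using ola_state_epoch[of t H M b amin \<omega>] st by auto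
  have hsk: "hs \<in> Hk" using t st by simp
  have xin: "fst (\<omega> t) \<in> Dk" and len: "length (Z @ [\<omega> t]) = M"
    and notin: "hs \<notin> ola_update b amin Hk (Z @ [\<omega> t])"
    using t(3) hsk st by (auto simp: ola_step_eq split: if_splits)
  define L where "L = Z @ [\<omega> t]"
  have L: "L = map \<omega> (filter (\<lambda>i. fst (\<omega> i) \<in> Dk) [s..<Suc t])"
    using s xin by (simp add: L_def)
  have "amin Hk L \<in> Hk" using amin_ok hsk by auto
  then have aH: "amin Hk L \<in> H" using ola_state_sub[of H M b amin \<omega> t] st by auto
  have "elimc b L hs (amin Hk L)"
    using notin hsk unfolding elimc_def ola_update_def Let_def L_def by auto
  moreover have "length (filter (\<lambda>i. fst (\<omega> i) \<in> Dk) [s..<Suc t]) = M"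
    using L len unfolding L_def by (metis length_map)
  ultimately have "badw H M b hs T s Dk \<omega>"
    unfolding badw_def using s(1) t(1) aH L by (intro exI[of _ t]) auto
  moreover have "0 < M" using len by auto
  ultimately show ?thesis using s t by (intro conjI exI[of _ s]) auto
qed




lemma sum_list_map_distinct:
  "distinct J \<Longrightarrow> sum_list (map f J) = (\<Sum>i\<in>set J. f i)"
  by (simp add: sum_list_distinct_conv_sum_set)

lemma div_diff_aux: "(a::real) - b = c - d \<Longrightarrow> a/n - b/n = c/n - d/n"
  by (simp add: diff_divide_distrib[symmetric])

lemma emp_err_diff: "emp_err L hs - emp_err L h = emp_err2 L hs h - emp_err2 L h hs"
proof -
  have "(\<Sum>(x,y)\<leftarrow>L. of_bool (hs x \<noteq> y)) - (\<Sum>(x,y)\<leftarrow>L. of_bool (h x \<noteq> y)) =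
        (\<Sum>(x,y)\<leftarrow>L. of_bool (hs x \<noteq> y \<and> h x = y)) - (\<Sum>(x,y)\<leftarrow>L. (of_bool (h x \<noteq> y \<and> hs x = y)::real))"
  proof (induction L)
    case (Cons a L) then show ?case by (cases a) auto
  qed simp
  then show ?thesis unfolding emp_err_def emp_err2_def by (rule div_diff_aux)
qed

lemma emp_err2_nonneg: "0 \<le> emp_err2 L h1 h2"
  unfolding emp_err2_def by (intro divide_nonneg_nonneg sum_list_nonneg) auto

context
  fixes x :: "nat \<Rightarrow> 'x" and p :: "nat \<Rightarrow> real" and hs :: "'x \<Rightarrow> bool" and A :: "nat set"
  assumes finA: "finite A" and p01: "\<forall>t\<in>A. 0 \<le> p t \<and> p t \<le> 1"
    and hsp: "\<forall>t\<in>A. hs (x t) = (1/2 \<le> p t)"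
begin

lemma hoeff_elim:
  assumes J: "distinct J" "set J \<subseteq> A" "length J = M" "0 < M" and bpos: "0 < b"
  shows "measure_pmf.prob (Pi_pmf A False (\<lambda>t. bernoulli_pmf (p t)))
           {g. elimc b (map (\<lambda>i. (x i, g i)) J) hs h} \<le> exp (-(real M * b\<^sup>2)/2)"
proof -
  define Q where "Q = Pi_pmf A False (\<lambda>t. bernoulli_pmf (p t))"
  define Jd where "Jd = {i \<in> set J. h (x i) \<noteq> hs (x i)}"
  define n where "n = card Jd"
  define X where "X = (\<lambda>i (g::nat \<Rightarrow> bool). if hs (x i) \<noteq> g i then 1 else (-1::real))"
  have finJd: "finite Jd" unfolding Jd_def by auto
  have JdA: "Jd \<subseteq> A" using J unfolding Jd_def by auto
  define \<epsilon> where "\<epsilon> = real M * b\<^sup>2 + b * sqrt (real M * real n)"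
  have key: "(\<Sum>i\<in>Jd. X i g) \<ge> \<epsilon>" if el: "elimc b (map (\<lambda>i. (x i, g i)) J) hs h" for g
  proof -
    define Aa where "Aa = (\<Sum>i\<in>Jd. of_bool (hs (x i) \<noteq> g i) :: real)"
    define Bb where "Bb = (\<Sum>i\<in>Jd. of_bool (hs (x i) = g i) :: real)"
    let ?L = "map (\<lambda>i. (x i, g i)) J"
    have e1: "emp_err2 ?L hs h = Aa / real M"
    proof -
      have "(\<Sum>(u,y)\<leftarrow>?L. of_bool (hs u \<noteq> y \<and> h u = y)) =
            (\<Sum>i\<in>set J. (of_bool (hs (x i) \<noteq> g i \<and> h (x i) = g i) :: real))"
        using J(1) by (simp add: sum_list_map_distinct o_def)
      also have "\<dots> = (\<Sum>i\<in>set J. if i \<in> Jd then of_bool (hs (x i) \<noteq> g i) else 0)"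
        by (intro sum.cong refl) (auto simp: Jd_def)
      also have "\<dots> = Aa" unfolding Aa_def
        by (simp only: sum.inter_restrict[symmetric, OF finite_set]) (simp add: Jd_def Int_absorb1)
      finally show ?thesis using J by (simp add: emp_err2_def)
    qed
    have e2: "emp_err2 ?L h hs = Bb / real M"
    proof -
      have "(\<Sum>(u,y)\<leftarrow>?L. of_bool (h u \<noteq> y \<and> hs u = y)) =
            (\<Sum>i\<in>set J. (of_bool (h (x i) \<noteq> g i \<and> hs (x i) = g i) :: real))"
        using J(1) by (simp add: sum_list_map_distinct o_def)
      also have "\<dots> = (\<Sum>i\<in>set J. if i \<in> Jd then of_bool (hs (x i) = g i) else 0)"
        by (intro sum.cong refl) (auto simp: Jd_def)
      also have "\<dots> = Bb" unfolding Bb_def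
        by (simp only: sum.inter_restrict[symmetric, OF finite_set]) (simp add: Jd_def Int_absorb1)
      finally show ?thesis using J by (simp add: emp_err2_def)
    qed
    have AB: "Aa + Bb = real n" unfolding Aa_def Bb_def n_def
    proof -
      have "(\<Sum>i\<in>Jd. of_bool (hs (x i) \<noteq> g i) + of_bool (hs (x i) = g i)) = (\<Sum>i\<in>Jd. (1::real))"
        by (intro sum.cong refl) auto
      then show "(\<Sum>i\<in>Jd. of_bool (hs (x i) \<noteq> g i)) + (\<Sum>i\<in>Jd. of_bool (hs (x i) = g i)) = real (card Jd)"
        by (simp add: sum.distrib)
    qed
    have AmB: "Aa - Bb = (\<Sum>i\<in>Jd. X i g)" unfolding Aa_def Bb_def X_def
      by (simp add: sum_subtractf[symmetric]) (intro sum.cong refl, auto)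
    have Ann: "0 \<le> Aa" "0 \<le> Bb" unfolding Aa_def Bb_def by (auto intro: sum_nonneg)
    have Mpos: "0 < real M" using J by simp
    from el have ineq: "Aa / M - Bb / M \<ge> b\<^sup>2 + b * (sqrt (Aa / M) + sqrt (Bb / M))"
      unfolding elimc_def emp_err_diff e1 e2 by simp
    have s1: "real M * sqrt (Aa / M) = sqrt (M * Aa)"
    proof -
      have "M * Aa = (real M)\<^sup>2 * (Aa / M)" using Mpos by (simp add: power2_eq_square)
      then have "sqrt (M * Aa) = sqrt ((real M)\<^sup>2) * sqrt (Aa / M)" by (simp only: real_sqrt_mult)
      then show ?thesis by simp
    qed
    have s2: "real M * sqrt (Bb / M) = sqrt (M * Bb)"
    proof -
      have "M * Bb = (real M)\<^sup>2 * (Bb / M)" using Mpos by (simp add: power2_eq_square)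
      then have "sqrt (M * Bb) = sqrt ((real M)\<^sup>2) * sqrt (Bb / M)" by (simp only: real_sqrt_mult)
      then show ?thesis by simp
    qed
    have "Aa - Bb = real M * (Aa / M - Bb / M)" using Mpos by (simp add: field_simps)
    also have "\<dots> \<ge> real M * (b\<^sup>2 + b * (sqrt (Aa / M) + sqrt (Bb / M)))"
      using ineq Mpos by (intro mult_left_mono) auto
    finally have "Aa - Bb \<ge> real M * b\<^sup>2 + b * (sqrt (M * Aa) + sqrt (M * Bb))"
      using s1 s2 by (simp add: algebra_simps)
    moreover have "sqrt (M * Aa) + sqrt (M * Bb) \<ge> sqrt (M * real n)"
    proof -
      have "sqrt (M * real n) = sqrt (M * Aa + M * Bb)" using AB by (simp add: distrib_left[symmetric])
      also have "\<dots> \<le> sqrt (M * Aa) + sqrt (M * Bb)"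
        using Ann Mpos by (intro sqrt_add_le_add_sqrt) auto
      finally show ?thesis .
    qed
    ultimately have "Aa - Bb \<ge> \<epsilon>" unfolding \<epsilon>_def using bpos
      mult_left_mono[of "sqrt (M * real n)" "sqrt (M * Aa) + sqrt (M * Bb)" b] by linarith
    then show ?thesis using AmB by simp
  qed
  have "measure_pmf.prob Q {g. elimc b (map (\<lambda>i. (x i, g i)) J) hs h}
        \<le> measure_pmf.prob Q {g. \<epsilon> \<le> (\<Sum>i\<in>Jd. X i g)}"
    using key by (intro measure_pmf.finite_measure_mono) auto
  also have "\<dots> \<le> exp (-(real M * b\<^sup>2)/2)"
  proof (cases "Jd = {}")
    case True
    then have "\<epsilon> > 0" unfolding \<epsilon>_def n_def using J bpos by simp
    then have "{g. \<epsilon> \<le> (\<Sum>i\<in>Jd. X i g)} = {}" using True by auto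
    then show ?thesis by simp
  next
    case False
    then have npos: "0 < n" unfolding n_def using finJd by (simp add: card_gt_0_iff)
    have indep: "prob_space.indep_vars (measure_pmf Q) (\<lambda>_. borel) X Jd"
    proof -
      have "prob_space.indep_vars (measure_pmf Q) (\<lambda>_. count_space UNIV) (\<lambda>i f. f i) Jd"
        unfolding Q_def
        by (rule prob_space.indep_vars_subset[OF measure_pmf.prob_space_axioms indep_vars_Pi_pmf[OF finA] JdA])
      then have "prob_space.indep_vars (measure_pmf Q) (\<lambda>_. borel)
                  (\<lambda>i f. (\<lambda>v. if hs (x i) \<noteq> v then 1 else (-1::real)) (f i)) Jd"
        by (rule prob_space.indep_vars_compose2[OF measure_pmf.prob_space_axioms]) simp
      then show ?thesis unfolding X_def .
    qed
    interpret H: Hoeffding_ineq "measure_pmf Q" Jd X "\<lambda>_. -1" "\<lambda>_. 1"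
        "\<Sum>i\<in>Jd. measure_pmf.expectation Q (X i)"
    proof -
      show "Hoeffding_ineq (measure_pmf Q) Jd X (\<lambda>_. -1) (\<lambda>_. 1)"
        unfolding Hoeffding_ineq_def indep_interval_bounded_random_variables_def
          indep_interval_bounded_random_variables_axioms_def
        using finJd indep by (auto simp: measure_pmf.prob_space_axioms X_def)
    qed simp
    have EX: "measure_pmf.expectation Q (X i) \<le> 0" if "i \<in> Jd" for i
    proof -
      have iA: "i \<in> A" using that JdA by auto
      have "measure_pmf.expectation Q (X i) =
            measure_pmf.expectation (map_pmf (\<lambda>g. g i) Q) (\<lambda>v. if hs (x i) \<noteq> v then 1 else (-1::real))"
        unfolding X_def by simp
      also have "map_pmf (\<lambda>g. g i) Q = bernoulli_pmf (p i)"
        unfolding Q_def using iA finA by (simp add: Pi_pmf_component)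
      finally show ?thesis using p01 hsp iA by auto
    qed
    have mu: "(\<Sum>i\<in>Jd. measure_pmf.expectation Q (X i)) \<le> 0"
      using EX by (simp add: sum_nonpos)
    have epos: "0 \<le> \<epsilon>" unfolding \<epsilon>_def using bpos by simp
    have sq: "(\<Sum>i\<in>Jd. ((1::real) - -1)\<^sup>2) = 4 * real n" by (simp add: n_def)
    have "measure_pmf.prob Q {g. \<epsilon> \<le> (\<Sum>i\<in>Jd. X i g)}
          \<le> measure_pmf.prob Q {g. (\<Sum>i\<in>Jd. measure_pmf.expectation Q (X i)) + \<epsilon> \<le> (\<Sum>i\<in>Jd. X i g)}"
      using mu by (intro measure_pmf.finite_measure_mono) auto
    also have "\<dots> \<le> exp (- 2 * \<epsilon>\<^sup>2 / (\<Sum>i\<in>Jd. ((1::real) - -1)\<^sup>2))"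
      using H.Hoeffding_ineq_ge[OF epos] npos sq by simp
    also have "\<dots> \<le> exp (-(real M * b\<^sup>2)/2)"
    proof -
      have "\<epsilon> \<ge> b * sqrt (real M * real n)" unfolding \<epsilon>_def by simp
      moreover have "b * sqrt (real M * real n) \<ge> 0" using bpos by simp
      ultimately have "\<epsilon>\<^sup>2 \<ge> (b * sqrt (real M * real n))\<^sup>2" by (simp add: power_mono)
      also have "(b * sqrt (real M * real n))\<^sup>2 = b\<^sup>2 * real M * real n"
        by (simp add: power_mult_distrib)
      finally have "\<epsilon>\<^sup>2 \<ge> b\<^sup>2 * real M * real n" .
      then have "2 * \<epsilon>\<^sup>2 / (4 * real n) \<ge> (real M * b\<^sup>2)/2"
        using npos by (simp add: field_simps)
      then show ?thesis unfolding sq by simp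
    qed
    finally show ?thesis .
  qed
  finally show ?thesis unfolding Q_def .
qed


lemma union_elim:
  assumes J: "distinct J" "set J \<subseteq> A" "length J = M" "0 < M" and bpos: "0 < b"
    and card: "card ((\<lambda>h. map h (map x J)) ` H) \<le> S"
  shows "measure_pmf.prob (Pi_pmf A False (\<lambda>t. bernoulli_pmf (p t)))
           {g. \<exists>h\<in>H. elimc b (map (\<lambda>i. (x i, g i)) J) hs h} \<le> real S * exp (-(real M * b\<^sup>2)/2)"
proof -
  define Q where "Q = Pi_pmf A False (\<lambda>t. bernoulli_pmf (p t))"
  define xs where "xs = map x J"
  define Pats where "Pats = (\<lambda>h. map h xs) ` H"
  define rep where "rep = (\<lambda>\<pi>. SOME h. h \<in> H \<and> map h xs = \<pi>)"
  have finP: "finite Pats"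
  proof (rule finite_subset)
    show "Pats \<subseteq> {l. set l \<subseteq> UNIV \<and> length l = length xs}" unfolding Pats_def by auto
    show "finite {l. set l \<subseteq> (UNIV::bool set) \<and> length l = length xs}"
      by (rule finite_lists_length_eq) simp
  qed
  have rep: "rep (map h xs) \<in> H \<and> map (rep (map h xs)) xs = map h xs" if "h \<in> H" for h
    unfolding rep_def by (rule someI[of _ h]) (use that in simp)
  have cong: "elimc b (map (\<lambda>i. (x i, g i)) J) hs h = elimc b (map (\<lambda>i. (x i, g i)) J) hs h'"
    if "map h xs = map h' xs" for h h' g
  proof -
    have hh: "\<forall>i\<in>set J. h (x i) = h' (x i)" using that unfolding xs_def by simp
    let ?L = "map (\<lambda>i. (x i, g i)) J"
    have "emp_err ?L h = emp_err ?L h'" unfolding emp_err_def using hh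
      by (simp add: o_def cong: map_cong)
    moreover have "emp_err2 ?L hs h = emp_err2 ?L hs h'" unfolding emp_err2_def using hh
      by (simp add: o_def cong: map_cong)
    moreover have "emp_err2 ?L h hs = emp_err2 ?L h' hs" unfolding emp_err2_def using hh
      by (simp add: o_def cong: map_cong)
    ultimately show ?thesis unfolding elimc_def by simp
  qed
  have sub: "{g. \<exists>h\<in>H. elimc b (map (\<lambda>i. (x i, g i)) J) hs h} \<subseteq>
             (\<Union>\<pi>\<in>Pats. {g. elimc b (map (\<lambda>i. (x i, g i)) J) hs (rep \<pi>)})"
  proof
    fix g assume "g \<in> {g. \<exists>h\<in>H. elimc b (map (\<lambda>i. (x i, g i)) J) hs h}"
    then obtain h where h: "h \<in> H" "elimc b (map (\<lambda>i. (x i, g i)) J) hs h" by auto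
    then have "elimc b (map (\<lambda>i. (x i, g i)) J) hs (rep (map h xs))"
      using cong[of "rep (map h xs)" h g] rep[OF h(1)] by simp
    then show "g \<in> (\<Union>\<pi>\<in>Pats. {g. elimc b (map (\<lambda>i. (x i, g i)) J) hs (rep \<pi>)})"
      using h(1) unfolding Pats_def by auto
  qed
  have "measure_pmf.prob Q {g. \<exists>h\<in>H. elimc b (map (\<lambda>i. (x i, g i)) J) hs h}
        \<le> measure_pmf.prob Q (\<Union>\<pi>\<in>Pats. {g. elimc b (map (\<lambda>i. (x i, g i)) J) hs (rep \<pi>)})"
    using sub by (intro measure_pmf.finite_measure_mono) auto
  also have "\<dots> \<le> (\<Sum>\<pi>\<in>Pats. measure_pmf.prob Q {g. elimc b (map (\<lambda>i. (x i, g i)) J) hs (rep \<pi>)})"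
    using finP by (intro measure_pmf.finite_measure_subadditive_finite) auto
  also have "\<dots> \<le> (\<Sum>\<pi>\<in>Pats. exp (-(real M * b\<^sup>2)/2))"
    unfolding Q_def by (intro sum_mono hoeff_elim[OF J bpos])
  also have "\<dots> = real (card Pats) * exp (-(real M * b\<^sup>2)/2)" by simp
  also have "\<dots> \<le> real S * exp (-(real M * b\<^sup>2)/2)"
    using card unfolding Pats_def xs_def by (intro mult_right_mono) auto
  finally show ?thesis unfolding Q_def .
qed

end



lemma pair_pmf_prob_le:
  assumes "\<And>a. measure_pmf.prob B {b. P a b} \<le> c"
  shows "measure_pmf.prob (pair_pmf A B) {(a,b). P a b} \<le> c"
proof -
  have c0: "0 \<le> c" using assms[of undefined] measure_nonneg[of "measure_pmf B"] by (meson order_trans)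
  have "emeasure (pair_pmf A B) {(a,b). P a b} = (\<integral>\<^sup>+x. indicator {(a,b). P a b} x \<partial>pair_pmf A B)"
    by simp
  also have "\<dots> = (\<integral>\<^sup>+a. \<integral>\<^sup>+b. indicator {(a,b). P a b} (a,b) \<partial>B \<partial>A)"
    by (rule nn_integral_pair_pmf')
  also have "\<dots> = (\<integral>\<^sup>+a. emeasure B {b. P a b} \<partial>A)"
  proof (intro nn_integral_cong)
    fix a
    have "(\<lambda>b. indicator {(a,b). P a b} (a,b) :: ennreal) = indicator {b. P a b}"
      by (auto simp: indicator_def)
    then show "(\<integral>\<^sup>+b. indicator {(a,b). P a b} (a,b) \<partial>B) = emeasure B {b. P a b}" by simp
  qed
  also have "\<dots> \<le> (\<integral>\<^sup>+a. ennreal c \<partial>A)"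
    using assms by (intro nn_integral_mono) (simp add: measure_pmf.emeasure_eq_measure ennreal_leI)
  also have "\<dots> = ennreal c" by (simp add: measure_pmf.emeasure_space_1)
  finally show ?thesis using c0 by (simp add: measure_pmf.emeasure_eq_measure)
qed

lemma badw_local:
  assumes "\<And>i. s \<le> i \<Longrightarrow> \<omega> i = \<omega>' i"
  shows "badw H M b hs T s Dk \<omega> = badw H M b hs T s Dk \<omega>'"
proof -
  have f: "filter (\<lambda>i. fst (\<omega> i) \<in> Dk) [s..<Suc t] = filter (\<lambda>i. fst (\<omega>' i) \<in> Dk) [s..<Suc t]" for t
    using assms by (intro filter_cong) auto
  have m: "map \<omega> (filter (\<lambda>i. fst (\<omega>' i) \<in> Dk) [s..<Suc t]) = map \<omega>' (filter (\<lambda>i. fst (\<omega>' i) \<in> Dk) [s..<Suc t])" for t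
    using assms by (intro map_cong) auto
  show ?thesis unfolding badw_def f m ..
qed

lemma bad_prob:
  assumes p01: "\<forall>t\<in>{s..<T}. 0 \<le> p t \<and> p t \<le> 1"
    and hsp: "\<forall>t\<in>{s..<T}. hs (x t) = (1/2 \<le> p t)"
    and bpos: "0 < b" and Mpos: "0 < M"
    and card: "\<And>J. distinct J \<Longrightarrow> set J \<subseteq> {..<T} \<Longrightarrow> length J = M \<Longrightarrow>
                 card ((\<lambda>h. map h (map x J)) ` H) \<le> S"
  shows "measure_pmf.prob (Pi_pmf {s..<T} False (\<lambda>t. bernoulli_pmf (p t)))
           {g. badw H M b hs T s Dk (\<lambda>i. (x i, g i))} \<le> real T * (real S * exp (-(real M * b\<^sup>2)/2))"
proof -
  define Q where "Q = Pi_pmf {s..<T} False (\<lambda>t. bernoulli_pmf (p t))"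
  define J where "J = (\<lambda>t. filter (\<lambda>i. x i \<in> Dk) [s..<Suc t])"
  define E where "E = (\<lambda>t. {g. length (J t) = M \<and> (\<exists>h\<in>H. elimc b (map (\<lambda>i. (x i, g i)) (J t)) hs h)})"
  have sub: "{g. badw H M b hs T s Dk (\<lambda>i. (x i, g i))} \<subseteq> (\<Union>t\<in>{s..<T}. E t)"
  proof (rule subsetI)
    fix g assume "g \<in> {g. badw H M b hs T s Dk (\<lambda>i. (x i, g i))}"
    then obtain t where t: "s \<le> t" "t < T" "length (J t) = M"
        "\<exists>h\<in>H. elimc b (map (\<lambda>i. (x i, g i)) (J t)) hs h"
      unfolding badw_def J_def fst_conv by (auto simp del: upt_Suc)
    then have "g \<in> E t" unfolding E_def by (auto simp del: upt_Suc)
    then show "g \<in> (\<Union>t\<in>{s..<T}. E t)" using t by auto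
  qed
  have Et: "measure_pmf.prob Q (E t) \<le> real S * exp (-(real M * b\<^sup>2)/2)" if t: "t \<in> {s..<T}" for t
  proof (cases "length (J t) = M")
    case True
    have "measure_pmf.prob Q (E t) = measure_pmf.prob Q {g. \<exists>h\<in>H. elimc b (map (\<lambda>i. (x i, g i)) (J t)) hs h}"
      unfolding E_def using True by simp
    also have "\<dots> \<le> real S * exp (-(real M * b\<^sup>2)/2)"
      unfolding Q_def
    proof (rule union_elim)
      show "finite {s..<T}" by simp
      show "\<forall>t\<in>{s..<T}. 0 \<le> p t \<and> p t \<le> 1" by fact
      show "\<forall>t\<in>{s..<T}. hs (x t) = (1/2 \<le> p t)" by fact
      show "distinct (J t)" unfolding J_def by simp
      show "set (J t) \<subseteq> {s..<T}" unfolding J_def using t by auto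
      show "length (J t) = M" by fact
      show "0 < M" by fact
      show "0 < b" by fact
      show "card ((\<lambda>h. map h (map x (J t))) ` H) \<le> S"
        using t True by (intro card) (auto simp: J_def)
    qed
    finally show ?thesis .
  next
    case False
    then have "E t = {}" unfolding E_def by simp
    then show ?thesis by simp
  qed
  have "measure_pmf.prob Q {g. badw H M b hs T s Dk (\<lambda>i. (x i, g i))} \<le> measure_pmf.prob Q (\<Union>t\<in>{s..<T}. E t)"
    using sub by (intro measure_pmf.finite_measure_mono) auto
  also have "\<dots> \<le> (\<Sum>t\<in>{s..<T}. measure_pmf.prob Q (E t))"
    by (intro measure_pmf.finite_measure_subadditive_finite) auto
  also have "\<dots> \<le> (\<Sum>t\<in>{s..<T}. real S * exp (-(real M * b\<^sup>2)/2))"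
    using Et by (intro sum_mono) auto
  also have "\<dots> = real (T - s) * (real S * exp (-(real M * b\<^sup>2)/2))" by simp
  also have "\<dots> \<le> real T * (real S * exp (-(real M * b\<^sup>2)/2))"
    by (intro mult_right_mono) auto
  finally show ?thesis unfolding Q_def .
qed

lemma elim_prob:
  assumes p01: "\<forall>t<T. 0 \<le> p t \<and> p t \<le> 1"
    and hsp: "\<forall>t<T. hs (x t) = (1/2 \<le> p t)"
    and bpos: "0 < b" and Mpos: "0 < M"
    and card: "\<And>J. distinct J \<Longrightarrow> set J \<subseteq> {..<T} \<Longrightarrow> length J = M \<Longrightarrow>
                 card ((\<lambda>h. map h (map x J)) ` H) \<le> S"
  shows "measure_pmf.prob (Pi_pmf {..<T} False (\<lambda>t. bernoulli_pmf (p t)))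
           {y. \<exists>s<T. badw H M b hs T s (fst (snd (ola_state H M b amin (\<lambda>i. (x i, y i)) s))) (\<lambda>i. (x i, y i))}
         \<le> real T * (real T * (real S * exp (-(real M * b\<^sup>2)/2)))"
proof -
  define Q where "Q = Pi_pmf {..<T} False (\<lambda>t. bernoulli_pmf (p t))"
  define c where "c = real T * (real S * exp (-(real M * b\<^sup>2)/2))"
  define E where "E = (\<lambda>s. {y. badw H M b hs T s (fst (snd (ola_state H M b amin (\<lambda>i. (x i, y i)) s))) (\<lambda>i. (x i, y i))})"
  have Es: "measure_pmf.prob Q (E s) \<le> c" if s: "s < T" for s
  proof -
    define mrg where "mrg = (\<lambda>(f::nat\<Rightarrow>bool,g::nat\<Rightarrow>bool) i. if i \<in> {..<s} then f i else g i)"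
    have U: "{..<s} \<union> {s..<T} = {..<T}" using s by auto
    have "Q = map_pmf mrg (pair_pmf (Pi_pmf {..<s} False (\<lambda>t. bernoulli_pmf (p t)))
                                     (Pi_pmf {s..<T} False (\<lambda>t. bernoulli_pmf (p t))))"
      unfolding Q_def mrg_def U[symmetric] by (rule Pi_pmf_union) auto
    then have "measure_pmf.prob Q (E s) = measure_pmf.prob (pair_pmf (Pi_pmf {..<s} False (\<lambda>t. bernoulli_pmf (p t)))
                                     (Pi_pmf {s..<T} False (\<lambda>t. bernoulli_pmf (p t)))) (mrg -` E s)"
      by simp
    also have "mrg -` E s = {(f,g). badw H M b hs T s (fst (snd (ola_state H M b amin (\<lambda>i. (x i, f i)) s))) (\<lambda>i. (x i, g i))}"
    proof -
      have "badw H M b hs T s (fst (snd (ola_state H M b amin (\<lambda>i. (x i, mrg (f,g) i)) s))) (\<lambda>i. (x i, mrg (f,g) i))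
          = badw H M b hs T s (fst (snd (ola_state H M b amin (\<lambda>i. (x i, f i)) s))) (\<lambda>i. (x i, g i))" for f g
      proof -
        have "ola_state H M b amin (\<lambda>i. (x i, mrg (f,g) i)) s = ola_state H M b amin (\<lambda>i. (x i, f i)) s"
          by (rule ola_state_local) (simp add: mrg_def)
        moreover have "badw H M b hs T s Dk (\<lambda>i. (x i, mrg (f,g) i)) = badw H M b hs T s Dk (\<lambda>i. (x i, g i))" for Dk
          by (rule badw_local) (simp add: mrg_def)
        ultimately show ?thesis by simp
      qed
      then show ?thesis unfolding E_def by (auto simp del: upt_Suc)
    qed
    also have "measure_pmf.prob (pair_pmf (Pi_pmf {..<s} False (\<lambda>t. bernoulli_pmf (p t)))
                                     (Pi_pmf {s..<T} False (\<lambda>t. bernoulli_pmf (p t))))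
         {(f,g). badw H M b hs T s (fst (snd (ola_state H M b amin (\<lambda>i. (x i, f i)) s))) (\<lambda>i. (x i, g i))} \<le> c"
      unfolding c_def
      by (rule pair_pmf_prob_le, rule bad_prob) (use p01 hsp bpos Mpos card in \<open>auto simp del: upt_Suc\<close>)
    finally show ?thesis .
  qed
  have "measure_pmf.prob Q {y. \<exists>s<T. badw H M b hs T s (fst (snd (ola_state H M b amin (\<lambda>i. (x i, y i)) s))) (\<lambda>i. (x i, y i))}
        = measure_pmf.prob Q (\<Union>s\<in>{..<T}. E s)"
    unfolding E_def by (intro arg_cong[where f="measure_pmf.prob Q"]) auto
  also have "\<dots> \<le> (\<Sum>s\<in>{..<T}. measure_pmf.prob Q (E s))"
    by (intro measure_pmf.finite_measure_subadditive_finite) auto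
  also have "\<dots> \<le> (\<Sum>s\<in>{..<T}. c)"
    using Es by (intro sum_mono) auto
  also have "\<dots> = real T * c" by simp
  finally show ?thesis unfolding Q_def c_def .
qed




lemma disc_main:
  assumes sel_ok: "\<forall>A x. A \<noteq> {} \<longrightarrow> (\<exists>h\<in>A. sel A x = h x)"
    and amin_ok: "\<forall>A Z. A \<noteq> {} \<longrightarrow> amin A Z \<in> A"
    and hsH: "hs \<in> H"
    and p01: "\<forall>t<T. 0 \<le> p t \<and> p t \<le> 1"
    and hsp: "\<forall>t<T. hs (x t) = (1/2 \<le> p t)"
    and bpos: "0 < M \<Longrightarrow> 0 < b"
    and card: "\<And>J. distinct J \<Longrightarrow> set J \<subseteq> {..<T} \<Longrightarrow> length J = M \<Longrightarrow>
                 card ((\<lambda>h. map h (map x J)) ` H) \<le> S"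
  shows "measure_pmf.expectation (Pi_pmf {..<T} False (\<lambda>t. bernoulli_pmf (p t)))
           (\<lambda>y. ola_regret H M b amin sel hs T (\<lambda>i. (x i, y i)))
         \<le> (if 0 < M then real T * (real T * (real T * (real S * exp (-(real M * b\<^sup>2)/2)))) else 0)"
proof -
  define Q where "Q = Pi_pmf {..<T} False (\<lambda>t. bernoulli_pmf (p t))"
  define E where "E = {y. 0 < M \<and> (\<exists>s<T. badw H M b hs T s (fst (snd (ola_state H M b amin (\<lambda>i. (x i, y i)) s))) (\<lambda>i. (x i, y i)))}"
  have pt: "ola_regret H M b amin sel hs T (\<lambda>i. (x i, y i)) \<le> real T * indicator E y" for y
  proof -
    have "ola_regret H M b amin sel hs T (\<lambda>i. (x i, y i))
          \<le> real T * of_bool (hs \<notin> fst (ola_state H M b amin (\<lambda>i. (x i, y i)) T))"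
      by (rule regret_le[OF sel_ok])
    also have "\<dots> \<le> real T * indicator E y"
    proof (cases "hs \<notin> fst (ola_state H M b amin (\<lambda>i. (x i, y i)) T)")
      case True
      then have "y \<in> E" unfolding E_def using elim_implies_bad[OF amin_ok hsH True] by auto
      then show ?thesis by simp
    qed simp
    finally show ?thesis .
  qed
  have int: "integrable (measure_pmf Q) (\<lambda>y. ola_regret H M b amin sel hs T (\<lambda>i. (x i, y i)))"
    by (rule measure_pmf.integrable_const_bound[where B="real T"]) (auto intro: regret_abs_le)
  have int2: "integrable (measure_pmf Q) (\<lambda>y. real T * indicator E y)"
    by (rule measure_pmf.integrable_const_bound[where B="real T"]) (auto simp: indicator_def)
  have "measure_pmf.expectation Q (\<lambda>y. ola_regret H M b amin sel hs T (\<lambda>i. (x i, y i)))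
        \<le> measure_pmf.expectation Q (\<lambda>y. real T * indicator E y)"
    by (intro integral_mono int int2 pt)
  also have "\<dots> = real T * measure_pmf.prob Q E" by simp
  also have "\<dots> \<le> (if 0 < M then real T * (real T * (real T * (real S * exp (-(real M * b\<^sup>2)/2)))) else 0)"
  proof (cases "0 < M")
    case True
    have "measure_pmf.prob Q E \<le> real T * (real T * (real S * exp (-(real M * b\<^sup>2)/2)))"
    proof -
      have "E = {y. \<exists>s<T. badw H M b hs T s (fst (snd (ola_state H M b amin (\<lambda>i. (x i, y i)) s))) (\<lambda>i. (x i, y i))}"
        using True unfolding E_def by blast
      then show ?thesis unfolding Q_def using elim_prob[OF p01 hsp bpos[OF True] True card] by (simp only:)
    qed
    then show ?thesis using True by (simp add: mult_left_mono)
  next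
    case False
    then have "E = {}" unfolding E_def by simp
    then show ?thesis using False by simp
  qed
  finally show ?thesis unfolding Q_def .
qed


lemma card_patterns_le:
  assumes xs: "set xs \<subseteq> X" "length xs = M"
  shows "card ((\<lambda>h. map h xs) ` H) \<le> shatter_coeff X H (2*M)"
proof -
  define ys where "ys = xs @ xs"
  have inj: "inj (\<lambda>l::bool list. l @ l)"
  proof (rule injI)
    fix l l' :: "bool list" assume "l @ l = l' @ l'"
    moreover have "length l = length l'"
      using arg_cong[OF calculation, of length] by simp
    ultimately show "l = l'" by simp
  qed
  have img: "(\<lambda>h. map h ys) ` H = (\<lambda>l. l @ l) ` ((\<lambda>h. map h xs) ` H)"
    unfolding ys_def by (auto simp: image_image)
  have c1: "card ((\<lambda>h. map h xs) ` H) = card ((\<lambda>h. map h ys) ` H)"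
    unfolding img by (rule card_image[symmetric]) (rule inj_on_subset[OF inj], simp)
  define C where "C = {card ((\<lambda>h. map h zs) ` H) | zs. length zs = 2*M \<and> set zs \<subseteq> X}"
  have mem: "card ((\<lambda>h. map h ys) ` H) \<in> C" unfolding C_def
    using xs by (intro CollectI exI[of _ ys]) (auto simp: ys_def)
  have bnd: "c \<le> 2^(2*M)" if "c \<in> C" for c
  proof -
    from that obtain zs where zs: "c = card ((\<lambda>h. map h zs) ` H)" "length zs = 2*M" unfolding C_def by auto
    have "(\<lambda>h. map h zs) ` H \<subseteq> {l. set l \<subseteq> (UNIV::bool set) \<and> length l = 2*M}" using zs by auto
    then have "card ((\<lambda>h. map h zs) ` H) \<le> card {l. set l \<subseteq> (UNIV::bool set) \<and> length l = 2*M}"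
      by (intro card_mono finite_lists_length_eq) auto
    also have "\<dots> = 2^(2*M)" using card_lists_length_eq[of "UNIV::bool set" "2*M"] by simp
    finally show ?thesis using zs by simp
  qed
  have finC: "finite C" by (rule finite_subset[of _ "{..2^(2*M)}"]) (use bnd in auto)
  have "card ((\<lambda>h. map h ys) ` H) \<le> Max C" by (rule Max_ge[OF finC mem])
  then show ?thesis using c1 unfolding shatter_coeff_def C_def by simp
qed

lemma shatter_coeff_pos:
  assumes "H \<noteq> {}" "x0 \<in> X"
  shows "1 \<le> shatter_coeff X H (2*M)"
proof -
  have "card ((\<lambda>h. map h (replicate M x0)) ` H) \<le> shatter_coeff X H (2*M)"
    by (rule card_patterns_le) (use assms in auto)
  moreover have "finite ((\<lambda>h. map h (replicate M x0)) ` H)"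
  proof (rule finite_subset)
    show "(\<lambda>h. map h (replicate M x0)) ` H \<subseteq> {l. set l \<subseteq> (UNIV::bool set) \<and> length l = M}" by auto
  qed (rule finite_lists_length_eq, simp)
  then have "1 \<le> card ((\<lambda>h. map h (replicate M x0)) ` H)"
    using assms(1) by (simp add: Suc_le_eq card_gt_0_iff)
  ultimately show ?thesis by simp
qed




definition wt :: "('x \<Rightarrow> real) \<Rightarrow> 'x \<Rightarrow> bool \<Rightarrow> ennreal" where
  "wt \<eta> x c = ennreal (if c then \<eta> x else 1 - \<eta> x)"

lemma rect_sum_emeasure:
  assumes "sets N = sets (MX \<Otimes>\<^sub>M count_space (UNIV::bool set))" "a \<in> sets MX"
  shows "emeasure N (a \<times> B) = (\<Sum>c\<in>B. emeasure N (a \<times> {c}))"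
proof -
  have S: "(\<lambda>c. a \<times> {c}) ` B \<subseteq> sets N"
  proof
    fix X assume "X \<in> (\<lambda>c. a \<times> {c}) ` B"
    then obtain c where "X = a \<times> {c}" by blast
    moreover have "a \<times> {c} \<in> sets (MX \<Otimes>\<^sub>M count_space (UNIV::bool set))"
      by (rule pair_measureI[OF assms(2)]) simp
    ultimately show "X \<in> sets N" using assms(1) by simp
  qed
  have dj: "disjoint_family_on (\<lambda>c. a \<times> {c}) B" unfolding disjoint_family_on_def by blast
  have fin: "finite B" by (rule finite_subset[of _ UNIV]) auto
  have "(\<Sum>c\<in>B. emeasure N (a \<times> {c})) = emeasure N (\<Union>c\<in>B. a \<times> {c})"
    by (rule sum_emeasure[OF S dj fin])
  also have "(\<Union>c\<in>B. a \<times> {c}) = a \<times> B" by blast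
  finally show ?thesis ..
qed

lemma nn_fst_bool:
  assumes "f \<in> borel_measurable (M1 \<Otimes>\<^sub>M count_space (UNIV::bool set))"
  shows "integral\<^sup>N (M1 \<Otimes>\<^sub>M count_space UNIV) f = (\<integral>\<^sup>+x. f (x, True) + f (x, False) \<partial>M1)"
proof -
  have "integral\<^sup>N (M1 \<Otimes>\<^sub>M count_space UNIV) f = (\<integral>\<^sup>+x. \<integral>\<^sup>+y. f (x, y) \<partial>count_space UNIV \<partial>M1)"
    by (rule sigma_finite_measure.nn_integral_fst[symmetric, OF sigma_finite_measure_count_space_finite assms]) simp
  also have "\<dots> = (\<integral>\<^sup>+x. f (x, True) + f (x, False) \<partial>M1)"
    by (intro nn_integral_cong) (simp add: nn_integral_count_space_finite UNIV_bool add.commute)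
  finally show ?thesis .
qed

context
  fixes MX :: "'x measure" and D :: "('x \<times> bool) measure" and \<eta> :: "'x \<Rightarrow> real"
  assumes D_prob: "prob_space D"
    and D_sets: "sets D = sets (MX \<Otimes>\<^sub>M count_space UNIV)"
    and eta_meas: "\<eta> \<in> borel_measurable MX"
    and eta_range: "\<forall>x\<in>space MX. 0 \<le> \<eta> x \<and> \<eta> x \<le> 1"
    and eta_cond: "\<forall>A\<in>sets MX. measure D (A \<times> {True}) = (LINT x:A|distr D MX fst. \<eta> x)"
begin

lemma fst_meas: "fst \<in> D \<rightarrow>\<^sub>M MX"
  using measurable_cong_sets[OF D_sets refl, of MX] measurable_fst[of MX "count_space UNIV"] by simp

lemma PX_prob: "prob_space (distr D MX fst)"
  by (rule prob_space.prob_space_distr[OF D_prob fst_meas])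

lemma sets_PX: "sets (distr D MX fst) = sets MX" by simp

lemma space_PX: "space (distr D MX fst) = space MX" by simp

lemma eta_PX: "\<eta> \<in> borel_measurable (distr D MX fst)"
  using eta_meas by (simp add: measurable_cong_sets[OF sets_PX refl])

lemma space_D: "space D = space MX \<times> UNIV"
  using sets_eq_imp_space_eq[OF D_sets] by (simp add: space_pair_measure)

lemma wt_meas: "(\<lambda>z. wt \<eta> (fst z) (snd z)) \<in> borel_measurable (distr D MX fst \<Otimes>\<^sub>M count_space UNIV)"
proof -
  have "(\<lambda>z. if snd z then \<eta> (fst z) else 1 - \<eta> (fst z)) \<in> borel_measurable (distr D MX fst \<Otimes>\<^sub>M count_space UNIV)"
    using eta_PX by measurable
  then show ?thesis unfolding wt_def by measurable
qed

lemma wt_ind_meas: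
  assumes a: "a \<in> sets MX"
  shows "(\<lambda>x. wt \<eta> x c * indicator a x) \<in> borel_measurable (distr D MX fst)"
proof -
  have f: "(\<lambda>x. if c then \<eta> x else 1 - \<eta> x) \<in> borel_measurable (distr D MX fst)"
    using eta_PX by (cases c) auto
  have a': "a \<in> sets (distr D MX fst)" using a by simp
  have "(\<lambda>x. ennreal (if c then \<eta> x else 1 - \<eta> x)) \<in> borel_measurable (distr D MX fst)"
    using f by (rule measurable_compose[OF _ measurable_ennreal])
  moreover have "indicator a \<in> borel_measurable (distr D MX fst)"
    using a' by (rule borel_measurable_indicator)
  ultimately show ?thesis unfolding wt_def by (rule borel_measurable_times_ennreal)
qed

lemma emeasure_D_True:
  assumes a: "a \<in> sets MX"
  shows "emeasure D (a \<times> {True}) = (\<integral>\<^sup>+x. wt \<eta> x True * indicator a x \<partial>distr D MX fst)"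
proof -
  interpret PX: prob_space "distr D MX fst" by (rule PX_prob)
  interpret D: prob_space D by (rule D_prob)
  have int: "integrable (distr D MX fst) (\<lambda>x. indicator a x * \<eta> x)"
  proof (rule PX.integrable_const_bound[where B=1])
    show "AE x in distr D MX fst. norm (indicator a x * \<eta> x) \<le> 1"
      using eta_range by (intro AE_I2) (auto simp: indicator_def space_PX)
    show "(\<lambda>x. indicator a x * \<eta> x) \<in> borel_measurable (distr D MX fst)"
      using eta_PX a by measurable
  qed
  have "emeasure D (a \<times> {True}) = ennreal (measure D (a \<times> {True}))"
    by (simp add: D.emeasure_eq_measure)
  also have "\<dots> = ennreal (\<integral>x. indicator a x * \<eta> x \<partial>distr D MX fst)"
    using eta_cond a by (simp add: set_lebesgue_integral_def)
  also have "\<dots> = (\<integral>\<^sup>+x. ennreal (indicator a x * \<eta> x) \<partial>distr D MX fst)"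
    using eta_range by (intro nn_integral_eq_integral[symmetric] int AE_I2) (auto simp: indicator_def space_PX)
  also have "\<dots> = (\<integral>\<^sup>+x. wt \<eta> x True * indicator a x \<partial>distr D MX fst)"
    by (intro nn_integral_cong) (auto simp: wt_def indicator_def)
  finally show ?thesis .
qed

lemma emeasure_D_False:
  assumes a: "a \<in> sets MX"
  shows "emeasure D (a \<times> {False}) = (\<integral>\<^sup>+x. wt \<eta> x False * indicator a x \<partial>distr D MX fst)"
proof -
  interpret PX: prob_space "distr D MX fst" by (rule PX_prob)
  interpret D: prob_space D by (rule D_prob)
  have aD: "a \<times> {c} \<in> sets D" for c using a D_sets by simp
  have e1: "emeasure D (a \<times> UNIV) = emeasure D (a \<times> {True}) + emeasure D (a \<times> {False})"
    using rect_sum_emeasure[OF D_sets a, of UNIV] by (simp add: UNIV_bool)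
  have e2: "emeasure D (a \<times> UNIV) = emeasure (distr D MX fst) a"
    using a sets.sets_into_space[OF a] by (subst emeasure_distr[OF fst_meas a]) (auto simp: space_D intro!: arg_cong[where f="emeasure D"])
  have e3: "emeasure (distr D MX fst) a = (\<integral>\<^sup>+x. indicator a x \<partial>distr D MX fst)"
    using a by simp
  have e4: "(\<integral>\<^sup>+x. indicator a x \<partial>distr D MX fst) =
      (\<integral>\<^sup>+x. wt \<eta> x True * indicator a x \<partial>distr D MX fst) + (\<integral>\<^sup>+x. wt \<eta> x False * indicator a x \<partial>distr D MX fst)"
  proof -
    have "(\<integral>\<^sup>+x. indicator a x \<partial>distr D MX fst) =
          (\<integral>\<^sup>+x. wt \<eta> x True * indicator a x + wt \<eta> x False * indicator a x \<partial>distr D MX fst)"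
    proof (intro nn_integral_cong)
      fix x assume "x \<in> space (distr D MX fst)"
      then have "0 \<le> \<eta> x" "\<eta> x \<le> 1" using eta_range by (auto simp: space_PX)
      then show "indicator a x = wt \<eta> x True * indicator a x + wt \<eta> x False * indicator a x"
        by (auto simp: wt_def indicator_def ennreal_plus[symmetric] simp del: ennreal_plus)
    qed
    also have "\<dots> = (\<integral>\<^sup>+x. wt \<eta> x True * indicator a x \<partial>distr D MX fst) + (\<integral>\<^sup>+x. wt \<eta> x False * indicator a x \<partial>distr D MX fst)"
      using a by (intro nn_integral_add wt_ind_meas)
    finally show ?thesis .
  qed
  have "emeasure D (a \<times> {True}) + emeasure D (a \<times> {False}) =
      emeasure D (a \<times> {True}) + (\<integral>\<^sup>+x. wt \<eta> x False * indicator a x \<partial>distr D MX fst)"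
    using e1 e2 e3 e4 emeasure_D_True[OF a] by metis
  moreover have "emeasure D (a \<times> {True}) \<noteq> \<top>" using D.emeasure_finite[of "a \<times> {True}"] by simp
  ultimately show ?thesis by (simp add: ennreal_add_left_cancel)
qed

lemma D_eq: "D = density (distr D MX fst \<Otimes>\<^sub>M count_space UNIV) (\<lambda>z. wt \<eta> (fst z) (snd z))"
  (is "D = ?N")
proof -
  interpret PX: prob_space "distr D MX fst" by (rule PX_prob)
  interpret D: prob_space D by (rule D_prob)
  interpret P: pair_sigma_finite "distr D MX fst" "count_space (UNIV::bool set)"
    by (intro pair_sigma_finite.intro PX.sigma_finite_measure_axioms sigma_finite_measure_count_space_finite) simp
  define E where "E = {a \<times> b | a b. a \<in> sets MX \<and> b \<in> sets (count_space (UNIV::bool set))}"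
  have setsN: "sets ?N = sets (MX \<Otimes>\<^sub>M count_space UNIV)"
    by (simp add: sets_pair_measure_cong[OF sets_PX refl])
  have sig: "sets (MX \<Otimes>\<^sub>M count_space UNIV) = sigma_sets (space MX \<times> UNIV) E"
    unfolding E_def by (simp add: sets_pair_measure)
  have Nrect: "emeasure ?N (a \<times> {c}) = (\<integral>\<^sup>+x. wt \<eta> x c * indicator a x \<partial>distr D MX fst)"
    if a: "a \<in> sets MX" for a c
  proof -
    have ac: "a \<times> {c} \<in> sets (distr D MX fst \<Otimes>\<^sub>M count_space UNIV)"
      using a by (simp add: sets_pair_measure_cong[OF sets_PX refl])
    have "emeasure ?N (a \<times> {c}) = (\<integral>\<^sup>+z. wt \<eta> (fst z) (snd z) * indicator (a \<times> {c}) z \<partial>(distr D MX fst \<Otimes>\<^sub>M count_space UNIV))"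
      by (rule emeasure_density[OF wt_meas ac])
    also have "\<dots> = (\<integral>\<^sup>+x. wt \<eta> x c * indicator a x \<partial>distr D MX fst)"
    proof (subst nn_fst_bool, goal_cases)
      case 1 show ?case using wt_meas ac by measurable
    next
      case 2 show ?case by (intro nn_integral_cong) (cases c; simp add: indicator_def)
    qed
    finally show ?thesis .
  qed
  show ?thesis
  proof (rule measure_eqI_generator_eq[where E=E and \<Omega>="space MX \<times> UNIV" and A="\<lambda>_. space MX \<times> UNIV"])
    show "Int_stable E" unfolding E_def by (rule Int_stable_pair_measure_generator)
    show "E \<subseteq> Pow (space MX \<times> UNIV)" unfolding E_def using sets.sets_into_space by fastforce
    show "sets D = sigma_sets (space MX \<times> UNIV) E" using D_sets sig by simp
    show "sets ?N = sigma_sets (space MX \<times> UNIV) E" using setsN sig by simp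
    show "range (\<lambda>_. space MX \<times> UNIV) \<subseteq> E" unfolding E_def by auto
    show "(\<Union>i. space MX \<times> UNIV) = space MX \<times> UNIV" by simp
    show "emeasure D (space MX \<times> UNIV) \<noteq> \<infinity>" for i::nat by simp
    fix X assume "X \<in> E"
    then obtain a B where X: "X = a \<times> B" "a \<in> sets MX" unfolding E_def by auto
    have "emeasure D (a \<times> B) = (\<Sum>c\<in>B. emeasure D (a \<times> {c}))"
      by (rule rect_sum_emeasure[OF D_sets X(2)])
    also have "\<dots> = (\<Sum>c\<in>B. emeasure ?N (a \<times> {c}))"
    proof (intro sum.cong refl)
      fix c show "emeasure D (a \<times> {c}) = emeasure ?N (a \<times> {c})"
        using Nrect[OF X(2)] emeasure_D_True[OF X(2)] emeasure_D_False[OF X(2)] by (cases c) auto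
    qed
    also have "\<dots> = emeasure ?N (a \<times> B)"
      by (rule rect_sum_emeasure[OF setsN X(2), symmetric])
    finally show "emeasure D X = emeasure ?N X" using X by simp
  qed
qed

lemma nn_integral_D:
  assumes f: "f \<in> borel_measurable (MX \<Otimes>\<^sub>M count_space UNIV)"
  shows "(\<integral>\<^sup>+z. f z \<partial>D) = (\<integral>\<^sup>+x. wt \<eta> x True * f (x, True) + wt \<eta> x False * f (x, False) \<partial>distr D MX fst)"
proof -
  interpret PX: prob_space "distr D MX fst" by (rule PX_prob)
  interpret P: pair_sigma_finite "distr D MX fst" "count_space (UNIV::bool set)"
    by (intro pair_sigma_finite.intro PX.sigma_finite_measure_axioms sigma_finite_measure_count_space_finite) simp
  have f': "f \<in> borel_measurable (distr D MX fst \<Otimes>\<^sub>M count_space UNIV)"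
    using f by (simp add: measurable_cong_sets[OF sets_pair_measure_cong[OF sets_PX refl] refl])
  have "(\<integral>\<^sup>+z. f z \<partial>D) = (\<integral>\<^sup>+z. f z \<partial>density (distr D MX fst \<Otimes>\<^sub>M count_space UNIV) (\<lambda>z. wt \<eta> (fst z) (snd z)))"
    by (subst D_eq) (rule refl)
  also have "\<dots> = (\<integral>\<^sup>+z. wt \<eta> (fst z) (snd z) * f z \<partial>(distr D MX fst \<Otimes>\<^sub>M count_space UNIV))"
    by (rule nn_integral_density[OF wt_meas f'])
  also have "\<dots> = (\<integral>\<^sup>+x. wt \<eta> x True * f (x, True) + wt \<eta> x False * f (x, False) \<partial>distr D MX fst)"
  proof (subst nn_fst_bool, goal_cases)
    case 1 show ?case using wt_meas f' by measurable
  qed simp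
  finally show ?thesis .
qed

end



definition Yset :: "nat \<Rightarrow> (nat \<Rightarrow> bool) set" where
  "Yset n = PiE_dflt {..<n} False (\<lambda>_. UNIV)"

definition Wt :: "('x \<Rightarrow> real) \<Rightarrow> nat \<Rightarrow> (nat \<Rightarrow> 'x) \<Rightarrow> (nat \<Rightarrow> bool) \<Rightarrow> ennreal" where
  "Wt \<eta> n x y = (\<Prod>t<n. wt \<eta> (x t) (y t))"

definition cmb :: "nat \<Rightarrow> (nat \<Rightarrow> 'x) \<Rightarrow> (nat \<Rightarrow> bool) \<Rightarrow> nat \<Rightarrow> 'x \<times> bool" where
  "cmb n x y = (\<lambda>t\<in>{..<n}. (x t, y t))"

lemma finite_Yset: "finite (Yset n)"
  unfolding Yset_def by (rule finite_PiE_dflt) auto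

lemma Yset_0: "Yset 0 = {\<lambda>_. False}"
  unfolding Yset_def PiE_dflt_def by auto

lemma Yset_Suc_bij: "bij_betw (\<lambda>(y,c). y(n := c)) (Yset n \<times> (UNIV::bool set)) (Yset (Suc n))"
proof (rule bij_betwI')
  fix a b assume "a \<in> Yset n \<times> (UNIV::bool set)" "b \<in> Yset n \<times> (UNIV::bool set)"
  then obtain y c y' c' where ab: "a = (y,c)" "b = (y',c')" "y \<in> Yset n" "y' \<in> Yset n" by auto
  have "y n = False" "y' n = False" using ab unfolding Yset_def PiE_dflt_def by auto
  then show "((case a of (y, c) \<Rightarrow> y(n := c)) = (case b of (y, c) \<Rightarrow> y(n := c))) = (a = b)"
    using ab by (auto simp: fun_eq_iff)
next
  fix a assume "a \<in> Yset n \<times> (UNIV::bool set)"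
  then show "(case a of (y, c) \<Rightarrow> y(n := c)) \<in> Yset (Suc n)"
    unfolding Yset_def PiE_dflt_def by auto
next
  fix y' assume y': "y' \<in> Yset (Suc n)"
  show "\<exists>a\<in>Yset n \<times> (UNIV::bool set). y' = (case a of (y, c) \<Rightarrow> y(n := c))"
    using y' unfolding Yset_def PiE_dflt_def
    by (intro bexI[of _ "(y'(n := False), y' n)"]) (auto simp: fun_eq_iff)
qed

lemma sum_Yset_Suc:
  "(\<Sum>y'\<in>Yset (Suc n). F y') = (\<Sum>y\<in>Yset n. F (y(n := True)) + F (y(n := False)))"
proof -
  have "(\<Sum>y'\<in>Yset (Suc n). F y') = (\<Sum>p\<in>Yset n \<times> (UNIV::bool set). F ((\<lambda>(y,c). y(n := c)) p))"
    by (rule sum.reindex_bij_betw[OF Yset_Suc_bij, symmetric])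
  also have "\<dots> = (\<Sum>(y,c)\<in>Yset n \<times> (UNIV::bool set). F (y(n := c)))"
    by (rule sum.cong) auto
  also have "\<dots> = (\<Sum>y\<in>Yset n. \<Sum>c\<in>UNIV. F (y(n := c)))"
    by (rule sum.cartesian_product[symmetric])
  also have "\<dots> = (\<Sum>y\<in>Yset n. F (y(n := True)) + F (y(n := False)))"
    by (simp add: UNIV_bool add.commute)
  finally show ?thesis .
qed

lemma Wt_Suc: "Wt \<eta> (Suc n) (x(n := x')) (y(n := c)) = Wt \<eta> n x y * wt \<eta> x' c"
proof -
  have "(\<Prod>t<n. wt \<eta> ((x(n := x')) t) ((y(n := c)) t)) = (\<Prod>t<n. wt \<eta> (x t) (y t))"
    by (intro prod.cong refl) auto
  then show ?thesis unfolding Wt_def by simp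
qed

lemma cmb_Suc: "cmb (Suc n) (x(n := x')) (y(n := c)) = (cmb n x y)(n := (x', c))"
  unfolding cmb_def by (auto simp: fun_eq_iff)

context
  fixes MX :: "'x measure" and D :: "('x \<times> bool) measure" and \<eta> :: "'x \<Rightarrow> real"
  assumes D_prob: "prob_space D"
    and D_sets: "sets D = sets (MX \<Otimes>\<^sub>M count_space UNIV)"
    and eta_meas: "\<eta> \<in> borel_measurable MX"
    and eta_range: "\<forall>x\<in>space MX. 0 \<le> \<eta> x \<and> \<eta> x \<le> 1"
    and eta_cond: "\<forall>A\<in>sets MX. measure D (A \<times> {True}) = (LINT x:A|distr D MX fst. \<eta> x)"
begin

lemma pairc_meas: "(\<lambda>x'. (x', c)) \<in> distr D MX fst \<rightarrow>\<^sub>M D"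
proof -
  have 1: "(\<lambda>x'. (x', c)) \<in> MX \<rightarrow>\<^sub>M MX \<Otimes>\<^sub>M count_space UNIV" by measurable
  have "measurable (distr D MX fst) D = measurable MX (MX \<Otimes>\<^sub>M count_space UNIV)"
    by (rule measurable_cong_sets) (simp_all add: D_sets)
  then show ?thesis using 1 by simp
qed

lemma wtc_meas: "(\<lambda>x'. wt \<eta> x' c) \<in> borel_measurable (distr D MX fst)"
proof -
  have f: "(\<lambda>x. if c then \<eta> x else 1 - \<eta> x) \<in> borel_measurable (distr D MX fst)"
    using eta_PX[OF D_prob D_sets eta_meas eta_range eta_cond] by (cases c) auto
  show ?thesis unfolding wt_def
    using f by (rule measurable_compose[OF _ measurable_ennreal])
qed

lemma cmb_meas: "(\<lambda>x. cmb n x y) \<in> PiM {..<n} (\<lambda>_. distr D MX fst) \<rightarrow>\<^sub>M PiM {..<n} (\<lambda>_. D)"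
  unfolding cmb_def
proof (rule measurable_restrict)
  fix t assume "t \<in> {..<n}"
  then show "(\<lambda>x. (x t, y t)) \<in> PiM {..<n} (\<lambda>_. distr D MX fst) \<rightarrow>\<^sub>M D"
  proof -
    have "(\<lambda>x. x t) \<in> PiM {..<n} (\<lambda>_. distr D MX fst) \<rightarrow>\<^sub>M distr D MX fst"
      using \<open>t \<in> {..<n}\<close> by (rule measurable_component_singleton)
    from measurable_compose[OF this pairc_meas[of "y t"]] show ?thesis by simp
  qed
qed

lemma Wt_meas:
  assumes "{..<n} \<subseteq> I"
  shows "(\<lambda>x. Wt \<eta> n x y) \<in> borel_measurable (PiM I (\<lambda>_. distr D MX fst))"
  unfolding Wt_def
proof (rule borel_measurable_prod_ennreal)
  fix t assume "t \<in> {..<n}"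
  then show "(\<lambda>x. wt \<eta> (x t) (y t)) \<in> borel_measurable (PiM I (\<lambda>_. distr D MX fst))"
  proof -
    have "(\<lambda>x. x t) \<in> PiM I (\<lambda>_. distr D MX fst) \<rightarrow>\<^sub>M distr D MX fst"
      using \<open>t \<in> {..<n}\<close> assms by (intro measurable_component_singleton) auto
    from measurable_compose[OF this wtc_meas[of "y t"]] show ?thesis by simp
  qed
qed

lemma cmb_space:
  assumes "x \<in> space (PiM I (\<lambda>_. distr D MX fst))" "{..<n} \<subseteq> I"
  shows "cmb n x y \<in> space (PiM {..<n} (\<lambda>_. D))"
  using assms unfolding cmb_def
  by (auto simp: space_PiM space_D[OF D_prob D_sets eta_meas eta_range eta_cond] PiE_iff)

lemma PiM_disint:
  "f \<in> borel_measurable (PiM {..<n} (\<lambda>_. D)) \<Longrightarrow>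
   (\<integral>\<^sup>+\<omega>. f \<omega> \<partial>PiM {..<n} (\<lambda>_. D)) =
   (\<integral>\<^sup>+x. (\<Sum>y\<in>Yset n. Wt \<eta> n x y * f (cmb n x y)) \<partial>PiM {..<n} (\<lambda>_. distr D MX fst))"
proof (induction n arbitrary: f)
  case 0
  have c: "cmb 0 x y = (\<lambda>_. undefined)" for x y unfolding cmb_def by auto
  show ?case by (simp add: PiM_empty Yset_0 Wt_def c nn_integral_count_space_finite)
next
  case (Suc n)
  define I where "I = {..<n}"
  have I: "{..<Suc n} = insert n I" "n \<notin> I" "finite I" unfolding I_def by auto
  interpret PD: product_sigma_finite "\<lambda>_::nat. D"
    unfolding product_sigma_finite_def using prob_space_imp_sigma_finite[OF D_prob] by simp
  interpret PP: product_sigma_finite "\<lambda>_::nat. distr D MX fst"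
    unfolding product_sigma_finite_def
    using prob_space_imp_sigma_finite[OF PX_prob[OF D_prob D_sets eta_meas eta_range eta_cond]] by simp
  have f: "f \<in> borel_measurable (PiM (insert n I) (\<lambda>_. D))" using Suc.prems I by simp
  define g where "g = (\<lambda>\<omega>. \<integral>\<^sup>+z. f (fun_upd \<omega> n z) \<partial>D)"
  have g_meas: "g \<in> borel_measurable (PiM I (\<lambda>_. D))"
  proof -
    have "(\<lambda>p. f ((fst p)(n := snd p))) \<in> borel_measurable (PiM I (\<lambda>_. D) \<Otimes>\<^sub>M D)"
      using measurable_compose[OF measurable_add_dim f] by (simp add: case_prod_unfold)
    from sigma_finite_measure.borel_measurable_nn_integral_fst[OF prob_space_imp_sigma_finite[OF D_prob] this] show ?thesis unfolding g_def by simp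
  qed
  have LHS: "(\<integral>\<^sup>+\<omega>. f \<omega> \<partial>PiM {..<Suc n} (\<lambda>_. D)) = (\<integral>\<^sup>+\<omega>. g \<omega> \<partial>PiM I (\<lambda>_. D))"
    unfolding I(1) g_def by (rule PD.product_nn_integral_insert[OF I(3) I(2) f])
  also have "\<dots> = (\<integral>\<^sup>+x. (\<Sum>y\<in>Yset n. Wt \<eta> n x y * g (cmb n x y)) \<partial>PiM I (\<lambda>_. distr D MX fst))"
    unfolding I_def by (rule Suc.IH[OF g_meas[unfolded I_def]])
  also have "\<dots> = (\<integral>\<^sup>+x. \<integral>\<^sup>+x'. (\<Sum>y'\<in>Yset (Suc n). Wt \<eta> (Suc n) (x(n := x')) y' * f (cmb (Suc n) (x(n := x')) y'))
                  \<partial>distr D MX fst \<partial>PiM I (\<lambda>_. distr D MX fst))"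
  proof (intro nn_integral_cong)
    fix x assume x: "x \<in> space (PiM I (\<lambda>_. distr D MX fst))"
    have fy: "(\<lambda>x'. wt \<eta> x' c * f ((cmb n x y)(n := (x', c)))) \<in> borel_measurable (distr D MX fst)" for y c
    proof -
      have cs: "cmb n x y \<in> space (PiM I (\<lambda>_. D))" using cmb_space[OF x] unfolding I_def by simp
      have "(\<lambda>x'. f ((cmb n x y)(n := (x', c)))) \<in> borel_measurable (distr D MX fst)"
        by (intro measurable_compose[OF pairc_meas] measurable_compose[OF measurable_component_update[OF cs I(2)] f])
      then show ?thesis by (intro borel_measurable_times_ennreal wtc_meas)
    qed
    have gy: "g (cmb n x y) = (\<integral>\<^sup>+x'. wt \<eta> x' True * f ((cmb n x y)(n := (x', True))) +
                                   wt \<eta> x' False * f ((cmb n x y)(n := (x', False))) \<partial>distr D MX fst)" for y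
    proof -
      have cs: "cmb n x y \<in> space (PiM I (\<lambda>_. D))" using cmb_space[OF x] unfolding I_def by simp
      have "(\<lambda>z. f ((cmb n x y)(n := z))) \<in> borel_measurable D"
        by (rule measurable_compose[OF measurable_component_update[OF cs I(2)] f])
      have m: "(\<lambda>z. f ((cmb n x y)(n := z))) \<in> borel_measurable (MX \<Otimes>\<^sub>M count_space UNIV)"
      proof -
        have "borel_measurable D = (borel_measurable (MX \<Otimes>\<^sub>M count_space UNIV) :: ('x \<times> bool \<Rightarrow> ennreal) set)"
          by (rule measurable_cong_sets) (simp_all add: D_sets)
        then show ?thesis using \<open>(\<lambda>z. f ((cmb n x y)(n := z))) \<in> borel_measurable D\<close> by simp
      qed
      show ?thesis unfolding g_def
        by (rule nn_integral_D[OF D_prob D_sets eta_meas eta_range eta_cond m])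
    qed
    have "(\<Sum>y\<in>Yset n. Wt \<eta> n x y * g (cmb n x y)) =
          (\<Sum>y\<in>Yset n. Wt \<eta> n x y * ((\<integral>\<^sup>+x'. wt \<eta> x' True * f ((cmb n x y)(n := (x', True))) \<partial>distr D MX fst) +
                                       (\<integral>\<^sup>+x'. wt \<eta> x' False * f ((cmb n x y)(n := (x', False))) \<partial>distr D MX fst)))"
      unfolding gy using fy by (subst nn_integral_add) auto
    also have "\<dots> = (\<Sum>y\<in>Yset n. (\<integral>\<^sup>+x'. Wt \<eta> n x y * (wt \<eta> x' True * f ((cmb n x y)(n := (x', True)))) \<partial>distr D MX fst) +
                                 (\<integral>\<^sup>+x'. Wt \<eta> n x y * (wt \<eta> x' False * f ((cmb n x y)(n := (x', False)))) \<partial>distr D MX fst))"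
      using fy by (simp add: nn_integral_cmult distrib_left)
    also have "\<dots> = (\<Sum>y\<in>Yset n. \<integral>\<^sup>+x'. Wt \<eta> n x y * (wt \<eta> x' True * f ((cmb n x y)(n := (x', True)))) +
                                 Wt \<eta> n x y * (wt \<eta> x' False * f ((cmb n x y)(n := (x', False)))) \<partial>distr D MX fst)"
      using fy by (subst nn_integral_add) (auto intro: borel_measurable_times_ennreal)
    also have "\<dots> = (\<integral>\<^sup>+x'. (\<Sum>y\<in>Yset n. Wt \<eta> n x y * (wt \<eta> x' True * f ((cmb n x y)(n := (x', True)))) +
                                 Wt \<eta> n x y * (wt \<eta> x' False * f ((cmb n x y)(n := (x', False))))) \<partial>distr D MX fst)"
      using fy by (subst nn_integral_sum) (auto intro!: borel_measurable_add borel_measurable_times_ennreal)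
    also have "\<dots> = (\<integral>\<^sup>+x'. (\<Sum>y'\<in>Yset (Suc n). Wt \<eta> (Suc n) (x(n := x')) y' * f (cmb (Suc n) (x(n := x')) y'))
                  \<partial>distr D MX fst)"
      by (intro nn_integral_cong) (simp add: sum_Yset_Suc Wt_Suc cmb_Suc mult.assoc)
    finally show "(\<Sum>y\<in>Yset n. Wt \<eta> n x y * g (cmb n x y)) = \<dots>" .
  qed
  also have "\<dots> = (\<integral>\<^sup>+x. (\<Sum>y\<in>Yset (Suc n). Wt \<eta> (Suc n) x y * f (cmb (Suc n) x y)) \<partial>PiM (insert n I) (\<lambda>_. distr D MX fst))"
  proof (rule PP.product_nn_integral_insert[OF I(3) I(2), symmetric])
    show "(\<lambda>x. \<Sum>y\<in>Yset (Suc n). Wt \<eta> (Suc n) x y * f (cmb (Suc n) x y))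
          \<in> borel_measurable (PiM (insert n I) (\<lambda>_. distr D MX fst))"
    proof (intro borel_measurable_sum borel_measurable_times_ennreal)
      fix y show "(\<lambda>x. Wt \<eta> (Suc n) x y) \<in> borel_measurable (PiM (insert n I) (\<lambda>_. distr D MX fst))"
        by (rule Wt_meas) (use I in auto)
      show "(\<lambda>x. f (cmb (Suc n) x y)) \<in> borel_measurable (PiM (insert n I) (\<lambda>_. distr D MX fst))"
        using measurable_compose[OF cmb_meas Suc.prems] I by simp
    qed
  qed
  finally show ?case using I by simp
qed

end



lemma numeric_bound:
  fixes T S M :: nat and b :: real
  assumes T: "1 \<le> T" and S: "1 \<le> S" and M: "0 < M"
    and b: "b = sqrt ((4 / real M) * ln (16 * real T ^ 2 * real S ^ 2))"
  shows "0 < b \<and> real T * (real T * (real T * (real S * exp (-(real M * b\<^sup>2)/2)))) \<le> 1/2"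
proof -
  define K where "K = 16 * real T ^ 2 * real S ^ 2"
  have T1: "(1::real) \<le> real T" and S1: "(1::real) \<le> real S" using T S by auto
  have "1 \<le> real T ^ 2" using T1 by (simp add: one_le_power)
  moreover have "1 \<le> real S ^ 2" using S1 by (simp add: one_le_power)
  ultimately have "1 \<le> real T ^ 2 * real S ^ 2" by (metis mult_mono' mult_1 zero_le_one)
  then have K16: "16 \<le> K" unfolding K_def by linarith
  then have Kpos: "0 < K" by simp
  have lnK: "0 < ln K" using K16 by simp
  have Mpos: "0 < real M" using M by simp
  have arg: "0 < (4 / real M) * ln K" using lnK Mpos by simp
  have bpos: "0 < b" unfolding b K_def[symmetric] using arg by simp
  have b2: "b\<^sup>2 = (4 / real M) * ln K" unfolding b K_def[symmetric] using arg by simp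
  have Mb: "real M * b\<^sup>2 / 2 = 2 * ln K" unfolding b2 using Mpos by (simp add: field_simps)
  have e: "exp (-(real M * b\<^sup>2)/2) = 1 / (K * K)"
  proof -
    have m: "-(real M * b\<^sup>2)/2 = - (2 * ln K)"
      using Mb by (simp only: minus_divide_left[symmetric])
    have k: "exp (2 * ln K) = K * K"
      using Kpos by (simp only: mult_2 exp_add exp_ln)
    show ?thesis unfolding m exp_minus k by (simp add: divide_inverse)
  qed
  have "real T * (real T * (real T * real S)) \<le> K * K / 2"
  proof -
    have a: "real T * (real T * (real T * real S)) \<le> real T ^ 4 * real S ^ 4"
    proof -
      have "real T ^ 3 \<le> real T ^ 4" using T1 by (simp add: power_increasing)
      moreover have "real S \<le> real S ^ 4" using S1
        by (metis power_increasing power_one_right one_le_numeral)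
      ultimately have "real T ^ 3 * real S \<le> real T ^ 4 * real S ^ 4"
        using T1 S1 by (intro mult_mono) auto
      then show ?thesis by (simp add: power3_eq_cube mult.assoc)
    qed
    have "K * K / 2 = 128 * (real T ^ 4 * real S ^ 4)" unfolding K_def by (simp add: power2_eq_square eval_nat_numeral algebra_simps)
    moreover have "0 \<le> real T ^ 4 * real S ^ 4" by simp
    ultimately show ?thesis using a by linarith
  qed
  then have "real T * (real T * (real T * (real S * (1 / (K * K))))) \<le> 1/2"
    using Kpos by (simp add: field_simps)
  then show ?thesis using bpos e by simp
qed


lemma inner_bound:
  assumes sel_ok: "\<forall>A x. A \<noteq> {} \<longrightarrow> (\<exists>h\<in>A. sel A x = h x)"
    and amin_mem: "\<forall>A Z. A \<noteq> {} \<longrightarrow> amin A Z \<in> A"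
    and hsH: "(\<lambda>x. 1/2 \<le> \<eta> x) \<in> H"
    and xsp: "\<forall>t<T. x t \<in> X"
    and eta_range: "\<forall>x\<in>X. 0 \<le> \<eta> x \<and> \<eta> x \<le> 1"
    and bpos: "0 < M \<Longrightarrow> 0 < b"
    and bound: "(if 0 < M then real T * (real T * (real T * (real (shatter_coeff X H (2*M)) * exp (-(real M * b\<^sup>2)/2)))) else 0) \<le> 1/2"
  shows "(\<Sum>y\<in>Yset T. Wt \<eta> T x y * ennreal (ola_regret H M b amin sel (\<lambda>x. 1/2 \<le> \<eta> x) T (cmb T x y) + real T))
         \<le> ennreal (1/2 + real T)"
proof -
  define hs where "hs = (\<lambda>x. 1/2 \<le> \<eta> x)"
  define p where "p = (\<lambda>t. \<eta> (x t))"
  define Q where "Q = Pi_pmf {..<T} False (\<lambda>t. bernoulli_pmf (p t))"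
  define R' where "R' = (\<lambda>y. ola_regret H M b amin sel hs T (\<lambda>i. (x i, y i)))"
  have p01: "\<forall>t<T. 0 \<le> p t \<and> p t \<le> 1" using xsp eta_range unfolding p_def by auto
  have hsp: "\<forall>t<T. hs (x t) = (1/2 \<le> p t)" unfolding hs_def p_def by simp
  have card: "card ((\<lambda>h. map h (map x J)) ` H) \<le> shatter_coeff X H (2*M)"
    if "distinct J" "set J \<subseteq> {..<T}" "length J = M" for J
    using that xsp by (intro card_patterns_le) auto
  have E0: "measure_pmf.expectation Q R' \<le> (if 0 < M then real T * (real T * (real T * (real (shatter_coeff X H (2*M)) * exp (-(real M * b\<^sup>2)/2)))) else 0)"
    unfolding Q_def R'_def by (rule disc_main[OF sel_ok amin_mem hsH[folded hs_def] p01 hsp bpos card])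
  have E: "measure_pmf.expectation Q R' \<le> 1/2" using E0 bound by linarith
  have pmfQ: "Wt \<eta> T x y = ennreal (pmf Q y)" if y: "y \<in> Yset T" for y
  proof -
    have "pmf Q y = (\<Prod>t<T. pmf (bernoulli_pmf (p t)) (y t))"
      unfolding Q_def using y by (intro pmf_Pi') (auto simp: Yset_def PiE_dflt_def)
    also have "\<dots> = (\<Prod>t<T. if y t then \<eta> (x t) else 1 - \<eta> (x t))"
      using p01 unfolding p_def by (intro prod.cong refl) auto
    finally have "ennreal (pmf Q y) = (\<Prod>t<T. ennreal (if y t then \<eta> (x t) else 1 - \<eta> (x t)))"
      using p01 unfolding p_def by (subst prod_ennreal) auto
    then show ?thesis unfolding Wt_def wt_def by simp
  qed
  have Rc: "ola_regret H M b amin sel hs T (cmb T x y) = R' y" for y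
    unfolding R'_def by (rule ola_regret_local) (simp add: cmb_def)
  have Rb: "\<bar>R' y\<bar> \<le> real T" for y unfolding R'_def by (rule regret_abs_le)
  have "(\<Sum>y\<in>Yset T. Wt \<eta> T x y * ennreal (ola_regret H M b amin sel hs T (cmb T x y) + real T))
        = (\<Sum>y\<in>Yset T. ennreal (pmf Q y * (R' y + real T)))"
  proof (intro sum.cong refl)
    fix y assume "y \<in> Yset T"
    moreover have "0 \<le> R' y + real T" using Rb[of y] by linarith
    ultimately show "Wt \<eta> T x y * ennreal (ola_regret H M b amin sel hs T (cmb T x y) + real T) = ennreal (pmf Q y * (R' y + real T))"
      by (simp add: pmfQ Rc ennreal_mult'')
  qed
  also have "\<dots> = ennreal (\<Sum>y\<in>Yset T. pmf Q y * (R' y + real T))"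
  proof (rule sum_ennreal)
    fix y show "0 \<le> pmf Q y * (R' y + real T)" using Rb[of y] by (intro mult_nonneg_nonneg) auto
  qed
  also have "(\<Sum>y\<in>Yset T. pmf Q y * (R' y + real T)) = measure_pmf.expectation Q (\<lambda>y. R' y + real T)"
  proof -
    have "measure_pmf.expectation Q (\<lambda>y. R' y + real T) = (\<Sum>y\<in>Yset T. (R' y + real T) * pmf Q y)"
    proof (rule integral_measure_pmf_real)
      show "finite (Yset T)" by (rule finite_Yset)
      fix a assume "a \<in> set_pmf Q"
      then show "a \<in> Yset T" unfolding Q_def Yset_def
        using set_Pi_pmf_subset[of "{..<T}" False] by (auto simp: PiE_dflt_def)
    qed
    then show ?thesis by (simp add: mult.commute)
  qed
  also have "measure_pmf.expectation Q (\<lambda>y. R' y + real T) = measure_pmf.expectation Q R' + real T"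
  proof -
    have "integrable (measure_pmf Q) R'"
      by (rule measure_pmf.integrable_const_bound[where B="real T"]) (auto intro: Rb)
    moreover have "integrable (measure_pmf Q) (\<lambda>_. real T)"
      by (rule measure_pmf.integrable_const_bound[where B="real T"]) auto
    ultimately show ?thesis by (simp add: integral_add measure_pmf.prob_space)
  qed
  finally have eq: "(\<Sum>y\<in>Yset T. Wt \<eta> T x y * ennreal (ola_regret H M b amin sel hs T (cmb T x y) + real T))
        = ennreal (measure_pmf.expectation Q R' + real T)" .
  have le: "ennreal (measure_pmf.expectation Q R' + real T) \<le> ennreal (1/2 + real T)"
    using E by (intro ennreal_leI) simp
  from eq le have "(\<Sum>y\<in>Yset T. Wt \<eta> T x y * ennreal (ola_regret H M b amin sel hs T (cmb T x y) + real T))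
        \<le> ennreal (1/2 + real T)" by (simp only:)
  then show ?thesis unfolding hs_def .
qed

theorem theorem1:
  fixes MX :: "'x measure" and D :: "('x \<times> bool) measure"
    and \<eta> :: "'x \<Rightarrow> real" and H :: "('x \<Rightarrow> bool) set"
    and d m T :: nat
    and sel :: "('x \<Rightarrow> bool) set \<Rightarrow> 'x \<Rightarrow> bool"
    and amin :: "('x \<Rightarrow> bool) set \<Rightarrow> ('x \<times> bool) list \<Rightarrow> ('x \<Rightarrow> bool)"
  assumes D_prob: "prob_space D"
    and D_sets: "sets D = sets (MX \<Otimes>\<^sub>M count_space UNIV)"
    and eta_meas: "\<eta> \<in> borel_measurable MX"
    and eta_range: "\<forall>x\<in>space MX. 0 \<le> \<eta> x \<and> \<eta> x \<le> 1"
    and eta_cond: "\<forall>A\<in>sets MX. measure D (A \<times> {True}) = (LINT x:A|distr D MX fst. \<eta> x)"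
    and H_meas: "H \<subseteq> MX \<rightarrow>\<^sub>M count_space UNIV"
    and H_vc: "vc_dim (space MX) H d"
    and bayes_in_H: "(\<lambda>x. 1/2 \<le> \<eta> x) \<in> H"
    and m_pos: "m > 0"
    and sel_ok: "\<forall>A x. A \<noteq> {} \<longrightarrow> (\<exists>h\<in>A. sel A x = h x)"
    and amin_ok: "\<forall>A Z. A \<noteq> {} \<longrightarrow>
                    amin A Z \<in> A \<and> (\<forall>h\<in>A. emp_err Z (amin A Z) \<le> emp_err Z h)"
    and regret_meas: "ola_regret H (ola_M m d T) (beta (space MX) H T (ola_M m d T)) amin sel
                        (\<lambda>x. 1/2 \<le> \<eta> x) T
                      \<in> borel_measurable (PiM {..<T} (\<lambda>_. D))"
  shows "integrable (PiM {..<T} (\<lambda>_. D))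
           (ola_regret H (ola_M m d T) (beta (space MX) H T (ola_M m d T)) amin sel
              (\<lambda>x. 1/2 \<le> \<eta> x) T)
       \<and> (\<integral>\<omega>. ola_regret H (ola_M m d T) (beta (space MX) H T (ola_M m d T)) amin sel
              (\<lambda>x. 1/2 \<le> \<eta> x) T \<omega> \<partial>(PiM {..<T} (\<lambda>_. D))) \<le> 1/2"
proof -
  define M where "M = ola_M m d T"
  define b where "b = beta (space MX) H T M"
  define R where "R = ola_regret H M b amin sel (\<lambda>x. 1/2 \<le> \<eta> x) T"
  define PM where "PM = PiM {..<T} (\<lambda>_. D)"
  have PMprob: "prob_space PM" unfolding PM_def by (rule prob_space_PiM) (rule D_prob)
  interpret PMp: prob_space PM by (rule PMprob)
  have Rmeas: "R \<in> borel_measurable PM" using regret_meas unfolding R_def PM_def M_def b_def .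
  have Rb: "\<bar>R \<omega>\<bar> \<le> real T" for \<omega> unfolding R_def by (rule regret_abs_le)
  have int: "integrable PM R"
    by (rule PMp.integrable_const_bound[where B="real T"]) (auto intro: Rb Rmeas)
  have intT: "integrable PM (\<lambda>_. real T)"
    by (rule PMp.integrable_const_bound[where B="real T"]) auto
  have bound: "(\<integral>\<omega>. R \<omega> \<partial>PM) \<le> 1/2"
  proof (cases "T = 0")
    case True
    then have "R = (\<lambda>_. 0)" unfolding R_def ola_regret_def by (simp add: fun_eq_iff)
    then show ?thesis by simp
  next
    case False
    have amin_mem: "\<forall>A Z. A \<noteq> {} \<longrightarrow> amin A Z \<in> A" using amin_ok by blast
    have "space D \<noteq> {}" using prob_space.not_empty[OF D_prob] .
    then obtain x0 where x0: "x0 \<in> space MX"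
      using space_D[OF D_prob D_sets eta_meas eta_range eta_cond] by auto
    define S where "S = shatter_coeff (space MX) H (2*M)"
    have S1: "1 \<le> S" unfolding S_def by (rule shatter_coeff_pos) (use bayes_in_H x0 in auto)
    have bM: "0 < M \<Longrightarrow> 0 < b \<and> real T * (real T * (real T * (real S * exp (-(real M * b\<^sup>2)/2)))) \<le> 1/2"
      by (rule numeric_bound) (use False S1 in \<open>auto simp: b_def beta_def S_def\<close>)
    have bpos: "0 < M \<Longrightarrow> 0 < b" using bM by blast
    have bnd: "(if 0 < M then real T * (real T * (real T * (real (shatter_coeff (space MX) H (2*M)) * exp (-(real M * b\<^sup>2)/2)))) else 0) \<le> 1/2"
      using bM unfolding S_def by auto
    have inner: "(\<Sum>y\<in>Yset T. Wt \<eta> T x y * ennreal (R (cmb T x y) + real T)) \<le> ennreal (1/2 + real T)"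
      if x: "x \<in> space (PiM {..<T} (\<lambda>_. distr D MX fst))" for x
      unfolding R_def
    proof (rule inner_bound[OF sel_ok amin_mem bayes_in_H _ eta_range bpos bnd])
      show "\<forall>t<T. x t \<in> space MX" using x by (auto simp: space_PiM PiE_iff)
    qed
    have F: "(\<lambda>\<omega>. ennreal (R \<omega> + real T)) \<in> borel_measurable PM"
      using Rmeas by (intro measurable_compose[OF _ measurable_ennreal] borel_measurable_add borel_measurable_const)
    have PXprob: "prob_space (PiM {..<T} (\<lambda>_. distr D MX fst))"
      by (rule prob_space_PiM) (rule PX_prob[OF D_prob D_sets eta_meas eta_range eta_cond])
    have "ennreal (\<integral>\<omega>. R \<omega> + real T \<partial>PM) = (\<integral>\<^sup>+\<omega>. ennreal (R \<omega> + real T) \<partial>PM)"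
    proof (rule nn_integral_eq_integral[symmetric])
      show "integrable PM (\<lambda>\<omega>. R \<omega> + real T)" using int intT by (rule Bochner_Integration.integrable_add)
      show "AE \<omega> in PM. 0 \<le> R \<omega> + real T"
        by (intro AE_I2) (use Rb in \<open>smt (verit)\<close>)
    qed
    also have "\<dots> = (\<integral>\<^sup>+x. (\<Sum>y\<in>Yset T. Wt \<eta> T x y * ennreal (R (cmb T x y) + real T)) \<partial>PiM {..<T} (\<lambda>_. distr D MX fst))"
      using PiM_disint[OF D_prob D_sets eta_meas eta_range eta_cond F[unfolded PM_def]] unfolding PM_def .
    also have "\<dots> \<le> (\<integral>\<^sup>+x. ennreal (1/2 + real T) \<partial>PiM {..<T} (\<lambda>_. distr D MX fst))"
      using inner by (intro nn_integral_mono) auto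
    also have "\<dots> = ennreal (1/2 + real T)"
      using prob_space.emeasure_space_1[OF PXprob] by simp
    finally have "(\<integral>\<omega>. R \<omega> + real T \<partial>PM) \<le> 1/2 + real T"
      by (subst (asm) ennreal_le_iff) auto
    moreover have "(\<integral>\<omega>. R \<omega> + real T \<partial>PM) = (\<integral>\<omega>. R \<omega> \<partial>PM) + real T"
      using int intT prob_space.prob_space[OF PMprob] by (simp add: Bochner_Integration.integral_add)
    ultimately show ?thesis by simp
  qed
  show ?thesis using int bound unfolding R_def PM_def b_def M_def by blast
qed


end
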